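(* Let $\varphi$ be the solution described below and let $u_*$ be a point of an open boundary edge $(p_i,p_{i+1})$ of $U$ (so $u_*$ is not a vertex). Then as $u\in U$ tends to $u_*$, $\nabla\varphi(u)\cdot\nu\to+\infty$, where $\nu$ is the outward unit normal to the edge, and $\nabla\varphi(u)\cdot(p_{i+1}-p_i)\to c_i:=b_{i+1}-b_i$.
   Context: $n\ge3$; $p_1,\dots,p_n\in\mathbb{R}^2_{(u_1,u_2)}$ are distinct vertices, in counterclockwise order, of a convex polygon with interior $U$; indices mod $n$ ($p_{n+1}=p_1$, $b_{n+1}=b_1$). $A\ge0$, $V(u)=A+\sum_i\frac{1}{2|u-p_i|}$. For $b_1,\dots,b_n\in\mathbb{R}$, $\varphi:\overline U\to\mathbb{R}$ is the unique continuous convex function, smooth in $U$, with $\det D^2\varphi=V$ in $U$, $\varphi(p_i)=b_i$, and $\varphi$ affine linear on each edge $[p_i,p_{i+1}]$. *)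

theory Defs
  imports "HOL-Analysis.Analysis"
begin

text \<open>Points of the plane are vectors in real^2; component 1 is u_1, component 2 is u_2.\<close>

text \<open>Cyclic successor of an index in 1..n (so that p_(n+1) = p_1).\<close>
definition cyc_succ :: "nat \<Rightarrow> nat \<Rightarrow> nat" where
  "cyc_succ n i = (if i = n then 1 else Suc i)"

text \<open>2D cross product (signed area); positive iff w is strictly left of v.\<close>
definition cross2 :: "real^2 \<Rightarrow> real^2 \<Rightarrow> real" where
  "cross2 v w = v$1 * w$2 - v$2 * w$1"

text \<open>p_1,...,p_n are distinct vertices, in counterclockwise order, of a convex polygon:
  every other vertex lies strictly to the left of each directed edge [p_i, p_(i+1)].\<close>
definition ccw_convex_polygon :: "nat \<Rightarrow> (nat \<Rightarrow> real^2) \<Rightarrow> bool" where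
  "ccw_convex_polygon n p \<longleftrightarrow> 3 \<le> n \<and> inj_on p {1..n} \<and>
     (\<forall>i\<in>{1..n}. \<forall>j\<in>{1..n}. j \<noteq> i \<and> j \<noteq> cyc_succ n i \<longrightarrow>
        cross2 (p (cyc_succ n i) - p i) (p j - p i) > 0)"

text \<open>Outward unit normal to the edge from a to b of a counterclockwise polygon
  (the edge direction rotated clockwise by 90 degrees, normalized).\<close>
definition outward_normal :: "real^2 \<Rightarrow> real^2 \<Rightarrow> real^2" where
  "outward_normal a b = (let e = b - a in (1 / norm e) *\<^sub>R (vector [e$2, - e$1]))"

definition grad :: "(real^2 \<Rightarrow> real) \<Rightarrow> real^2 \<Rightarrow> real^2" where
  "grad f u = (\<chi> j. frechet_derivative f (at u) (axis j 1))"

definition hessian :: "(real^2 \<Rightarrow> real) \<Rightarrow> real^2 \<Rightarrow> real^2^2" where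
  "hessian f u = (\<chi> i j. frechet_derivative (\<lambda>v. grad f v $ i) (at u) (axis j 1))"

fun Ck_on :: "nat \<Rightarrow> (real^2) set \<Rightarrow> (real^2 \<Rightarrow> real) \<Rightarrow> bool" where
  "Ck_on 0 S f = continuous_on S f"
| "Ck_on (Suc k) S f = (continuous_on S f \<and> f differentiable_on S \<and>
       (\<forall>j. Ck_on k S (\<lambda>u. grad f u $ j)))"

definition smooth_on :: "(real^2) set \<Rightarrow> (real^2 \<Rightarrow> real) \<Rightarrow> bool" where
  "smooth_on S f \<longleftrightarrow> (\<forall>k. Ck_on k S f)"

definition Vpot :: "real \<Rightarrow> nat \<Rightarrow> (nat \<Rightarrow> real^2) \<Rightarrow> real^2 \<Rightarrow> real" where
  "Vpot A n p u = A + (\<Sum>i=1..n. 1 / (2 * norm (u - p i)))"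

end

theory Submission
  imports Defs "HOL-Real_Asymp.Real_Asymp"
begin

lemma inner2: "(x::real^2) \<bullet> y = x$1 * y$1 + x$2 * y$2"
  by (simp add: inner_vec_def sum_2)

lemma vec2_eq: "((x::real^2) = y) \<longleftrightarrow> x$1 = y$1 \<and> x$2 = y$2"
  by (metis (full_types) exhaust_2 vec_eq_iff)

lemma vec2_decomp: "(v::real^2) = v$1 *\<^sub>R axis 1 1 + v$2 *\<^sub>R axis 2 1"
  by (simp add: vec2_eq axis_def)

lemma frechet_grad:
  fixes f :: "real^2 \<Rightarrow> real"
  assumes "f differentiable (at y)"
  shows "frechet_derivative f (at y) v = grad f y \<bullet> v"
proof -
  let ?D = "frechet_derivative f (at y)"
  have "(f has_derivative ?D) (at y)" using assms frechet_derivative_works by blast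
  then have lin: "linear ?D" using has_derivative_linear by blast
  have "?D v = ?D (v$1 *\<^sub>R axis 1 1 + v$2 *\<^sub>R axis 2 1)" using vec2_decomp[of v] by simp
  also have "\<dots> = v$1 * ?D (axis 1 1) + v$2 * ?D (axis 2 1)"
    using lin by (simp add: linear_add linear_scale)
  finally show ?thesis by (simp add: grad_def inner2 mult.commute)
qed

lemma dir_deriv:
  fixes f :: "real^2 \<Rightarrow> real"
  assumes "f differentiable (at (x + t *\<^sub>R v))"
  shows "((\<lambda>\<tau>. f (x + \<tau> *\<^sub>R v)) has_real_derivative (grad f (x + t *\<^sub>R v) \<bullet> v)) (at t)"
proof -
  let ?D = "frechet_derivative f (at (x + t *\<^sub>R v))"
  have fd: "(f has_derivative ?D) (at (x + t *\<^sub>R v))" using assms frechet_derivative_works by blast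
  have ld: "((\<lambda>\<tau>. x + \<tau> *\<^sub>R v) has_derivative (\<lambda>d. d *\<^sub>R v)) (at t)"
    by (auto intro!: derivative_eq_intros)
  have "((\<lambda>\<tau>. f (x + \<tau> *\<^sub>R v)) has_derivative (\<lambda>d. ?D (d *\<^sub>R v))) (at t)"
    using has_derivative_compose[OF ld fd] by (simp add: o_def)
  moreover have "linear ?D" using fd has_derivative_linear by blast
  ultimately have "((\<lambda>\<tau>. f (x + \<tau> *\<^sub>R v)) has_derivative (\<lambda>d. d * ?D v)) (at t)"
    by (simp add: linear_scale)
  then show ?thesis using frechet_grad[OF assms, of v]
    by (simp add: has_field_derivative_def mult.commute[of _ "grad f (x + t *\<^sub>R v) \<bullet> v"])
qed

definition qf :: "real^2^2 \<Rightarrow> real^2 \<Rightarrow> real" where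
  "qf H v = v$1 * v$1 * H$1$1 + v$1 * v$2 * H$1$2 + v$2 * v$1 * H$2$1 + v$2 * v$2 * H$2$2"

lemma grad_comp_hess: "grad (\<lambda>y. grad f y $ j) x $ k = hessian f x $ j $ k"
  by (simp add: grad_def hessian_def)

lemma dir_deriv2:
  fixes f :: "real^2 \<Rightarrow> real"
  assumes "\<And>j. (\<lambda>y. grad f y $ j) differentiable (at (x + t *\<^sub>R v))"
  shows "((\<lambda>\<tau>. grad f (x + \<tau> *\<^sub>R v) \<bullet> v) has_real_derivative qf (hessian f (x + t *\<^sub>R v)) v) (at t)"
proof -
  have d1: "((\<lambda>\<tau>. grad f (x + \<tau> *\<^sub>R v) $ j) has_real_derivative
      (grad (\<lambda>y. grad f y $ j) (x + t *\<^sub>R v) \<bullet> v)) (at t)" for j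
    using dir_deriv[OF assms[of j]] by simp
  have "((\<lambda>\<tau>. grad f (x + \<tau> *\<^sub>R v) $ 1 * v$1 + grad f (x + \<tau> *\<^sub>R v) $ 2 * v$2) has_real_derivative
      (grad (\<lambda>y. grad f y $ 1) (x + t *\<^sub>R v) \<bullet> v) * v$1 + (grad (\<lambda>y. grad f y $ 2) (x + t *\<^sub>R v) \<bullet> v) * v$2) (at t)"
    by (intro derivative_intros DERIV_cmult_right d1)
  then show ?thesis
    by (simp add: inner2 grad_comp_hess qf_def algebra_simps)
qed

lemma norm_axis_comb: "norm (a *\<^sub>R axis 1 (1::real) + b *\<^sub>R axis 2 1 :: real^2) \<le> \<bar>a\<bar> + \<bar>b\<bar>"
  using norm_triangle_ineq[of "a *\<^sub>R axis 1 (1::real)" "b *\<^sub>R axis 2 1 :: real^2"] by simp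

lemma schwarz:
  fixes f :: "real^2 \<Rightarrow> real"
  assumes S: "open S" "x \<in> S"
    and d0: "\<forall>y\<in>S. f differentiable (at y)"
    and d1: "\<forall>j. \<forall>y\<in>S. (\<lambda>y. grad f y $ j) differentiable (at y)"
    and ch: "\<forall>j k. continuous_on S (\<lambda>y. hessian f y $ j $ k)"
  shows "hessian f x $ 1 $ 2 = hessian f x $ 2 $ 1"
proof (rule ccontr)
  assume ne: "hessian f x $ 1 $ 2 \<noteq> hessian f x $ 2 $ 1"
  define e1 :: "real^2" where "e1 = axis 1 1"
  define e2 :: "real^2" where "e2 = axis 2 1"
  define P where "P a b = x + a *\<^sub>R e1 + b *\<^sub>R e2" for a b
  define H12 where "H12 y = hessian f y $ 1 $ 2" for y
  define H21 where "H21 y = hessian f y $ 2 $ 1" for y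
  define f1 where "f1 y = grad f y $ 1" for y
  define f2 where "f2 y = grad f y $ 2" for y
  define d where "d = \<bar>H12 x - H21 x\<bar>"
  have dpos: "d > 0" using ne by (simp add: d_def H12_def H21_def)
  obtain \<rho> where rho: "\<rho> > 0" "ball x \<rho> \<subseteq> S" using S openE by blast
  have c12: "isCont H12 x" unfolding H12_def
    using ch S continuous_on_eq_continuous_at by blast
  have c21: "isCont H21 x" unfolding H21_def
    using ch S continuous_on_eq_continuous_at by blast
  obtain \<delta>1 where dl1: "\<delta>1 > 0" "\<forall>y. dist y x < \<delta>1 \<longrightarrow> dist (H12 y) (H12 x) < d/2"
    using c12 dpos unfolding continuous_at_eps_delta by (meson half_gt_zero)
  obtain \<delta>2 where dl2: "\<delta>2 > 0" "\<forall>y. dist y x < \<delta>2 \<longrightarrow> dist (H21 y) (H21 x) < d/2"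
    using c21 dpos unfolding continuous_at_eps_delta by (meson half_gt_zero)
  define h where "h = min \<rho> (min \<delta>1 \<delta>2) / 3"
  have hpos: "h > 0" using rho dl1 dl2 by (simp add: h_def)
  have Pdist: "dist (P a b) x < 3 * h" if "0 \<le> a" "a \<le> h" "0 \<le> b" "b \<le> h" for a b
  proof -
    have "dist (P a b) x = norm (a *\<^sub>R e1 + b *\<^sub>R e2)" by (simp add: P_def dist_norm)
    also have "\<dots> \<le> \<bar>a\<bar> + \<bar>b\<bar>" unfolding e1_def e2_def by (rule norm_axis_comb)
    finally show ?thesis using that hpos by linarith
  qed
  have PS: "P a b \<in> S" if "0 \<le> a" "a \<le> h" "0 \<le> b" "b \<le> h" for a b
    using Pdist[OF that] rho h_def by (auto simp: dist_commute)
  have DA: "((\<lambda>a. g (P a b)) has_real_derivative grad g (P a b) $ 1) (at a)"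
    if "g differentiable (at (P a b))" for g a b
  proof -
    have eq: "(\<lambda>a. g (P a b)) = (\<lambda>a. g ((x + b *\<^sub>R e2) + a *\<^sub>R e1))"
      by (simp add: P_def add_ac)
    have "g differentiable (at ((x + b *\<^sub>R e2) + a *\<^sub>R e1))"
      using that by (simp add: P_def add_ac)
    from dir_deriv[OF this] show ?thesis unfolding eq
      by (simp add: P_def add_ac inner2 e1_def axis_def)
  qed
  have DB: "((\<lambda>b. g (P a b)) has_real_derivative grad g (P a b) $ 2) (at b)"
    if "g differentiable (at (P a b))" for g a b
  proof -
    have eq: "(\<lambda>b. g (P a b)) = (\<lambda>b. g ((x + a *\<^sub>R e1) + b *\<^sub>R e2))"
      by (simp add: P_def add_ac)
    have "g differentiable (at ((x + a *\<^sub>R e1) + b *\<^sub>R e2))"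
      using that by (simp add: P_def add_ac)
    from dir_deriv[OF this] show ?thesis unfolding eq
      by (simp add: P_def add_ac inner2 e2_def axis_def)
  qed
  define \<Delta> where "\<Delta> = f (P h h) - f (P h 0) - f (P 0 h) + f (P 0 0)"
  have "\<exists>\<xi>. 0 < \<xi> \<and> \<xi> < h \<and> (\<lambda>a. f (P a h) - f (P a 0)) h - (\<lambda>a. f (P a h) - f (P a 0)) 0
        = (h - 0) * (f1 (P \<xi> h) - f1 (P \<xi> 0))"
  proof (rule MVT2[OF hpos])
    fix a assume "0 \<le> a" "a \<le> h"
    then have "P a h \<in> S" "P a 0 \<in> S" using PS hpos by auto
    then show "((\<lambda>a. f (P a h) - f (P a 0)) has_real_derivative (f1 (P a h) - f1 (P a 0))) (at a)"
      unfolding f1_def using d0 by (intro derivative_intros DA) auto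
  qed
  then obtain \<xi> where xi: "0 < \<xi>" "\<xi> < h" "\<Delta> = h * (f1 (P \<xi> h) - f1 (P \<xi> 0))"
    by (auto simp: \<Delta>_def algebra_simps)
  have "\<exists>\<eta>. 0 < \<eta> \<and> \<eta> < h \<and> f1 (P \<xi> h) - f1 (P \<xi> 0) = (h - 0) * H12 (P \<xi> \<eta>)"
  proof (rule MVT2[OF hpos])
    fix b assume "0 \<le> b" "b \<le> h"
    then have "P \<xi> b \<in> S" using PS xi by auto
    then show "((\<lambda>b. f1 (P \<xi> b)) has_real_derivative H12 (P \<xi> b)) (at b)"
      unfolding f1_def H12_def using d1 DB[of "\<lambda>y. grad f y $ 1"] by (simp add: grad_comp_hess)
  qed
  then obtain \<eta> where eta: "0 < \<eta>" "\<eta> < h" "\<Delta> = h * h * H12 (P \<xi> \<eta>)"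
    using xi by auto
  have "\<exists>\<eta>'. 0 < \<eta>' \<and> \<eta>' < h \<and> (\<lambda>b. f (P h b) - f (P 0 b)) h - (\<lambda>b. f (P h b) - f (P 0 b)) 0
        = (h - 0) * (f2 (P h \<eta>') - f2 (P 0 \<eta>'))"
  proof (rule MVT2[OF hpos])
    fix b assume "0 \<le> b" "b \<le> h"
    then have "P h b \<in> S" "P 0 b \<in> S" using PS hpos by auto
    then show "((\<lambda>b. f (P h b) - f (P 0 b)) has_real_derivative (f2 (P h b) - f2 (P 0 b))) (at b)"
      unfolding f2_def using d0 by (intro derivative_intros DB) auto
  qed
  then obtain \<eta>' where eta': "0 < \<eta>'" "\<eta>' < h" "\<Delta> = h * (f2 (P h \<eta>') - f2 (P 0 \<eta>'))"
    by (auto simp: \<Delta>_def algebra_simps)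
  have "\<exists>\<xi>'. 0 < \<xi>' \<and> \<xi>' < h \<and> f2 (P h \<eta>') - f2 (P 0 \<eta>') = (h - 0) * H21 (P \<xi>' \<eta>')"
  proof (rule MVT2[OF hpos])
    fix a assume "0 \<le> a" "a \<le> h"
    then have "P a \<eta>' \<in> S" using PS eta' by auto
    then show "((\<lambda>a. f2 (P a \<eta>')) has_real_derivative H21 (P a \<eta>')) (at a)"
      unfolding f2_def H21_def using d1 DA[of "\<lambda>y. grad f y $ 2"] by (simp add: grad_comp_hess)
  qed
  then obtain \<xi>' where xi': "0 < \<xi>'" "\<xi>' < h" "\<Delta> = h * h * H21 (P \<xi>' \<eta>')"
    using eta' by auto
  have eqH: "H12 (P \<xi> \<eta>) = H21 (P \<xi>' \<eta>')" using eta xi' hpos by simp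
  have "dist (P \<xi> \<eta>) x < \<delta>1" using Pdist[of \<xi> \<eta>] xi eta h_def by auto
  then have a1: "\<bar>H12 (P \<xi> \<eta>) - H12 x\<bar> < d/2" using dl1 by (simp add: dist_real_def)
  have "dist (P \<xi>' \<eta>') x < \<delta>2" using Pdist[of \<xi>' \<eta>'] xi' eta' h_def by auto
  then have a2: "\<bar>H21 (P \<xi>' \<eta>') - H21 x\<bar> < d/2" using dl2 by (simp add: dist_real_def)
  show False using a1 a2 eqH d_def by linarith
qed

lemma second_deriv_max:
  fixes W W1 :: "real \<Rightarrow> real"
  assumes dp: "\<delta> > 0" and mx: "\<forall>\<tau>. \<bar>\<tau>\<bar> < \<delta> \<longrightarrow> W \<tau> \<le> W 0"
    and dW: "\<forall>\<tau>. \<bar>\<tau>\<bar> < \<delta> \<longrightarrow> (W has_real_derivative W1 \<tau>) (at \<tau>)"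
    and dW1: "(W1 has_real_derivative d) (at 0)"
  shows "d \<le> 0"
proof (rule ccontr)
  assume "\<not> d \<le> 0"
  then have dpos: "d > 0" by simp
  have dW0: "(W has_real_derivative W1 0) (at 0)" using dW dp by auto
  have W10: "W1 0 = 0"
    by (rule DERIV_local_max[OF dW0 dp]) (use mx in auto)
  obtain d' where d': "d' > 0" "\<forall>h>0. h < d' \<longrightarrow> W1 0 < W1 (0 + h)"
    using DERIV_pos_inc_right[OF dW1 dpos] by blast
  define h where "h = min d' \<delta> / 2"
  have hp: "0 < h" "h < d'" "h < \<delta>" using d' dp by (auto simp: h_def)
  obtain z where z: "0 < z" "z < h" "W h - W 0 = (h - 0) * W1 z"
    using MVT2[OF hp(1), of W W1] dW hp by auto
  have "W1 z > 0" using d' z hp W10 by auto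
  then have "h * W1 z > 0" using hp by simp
  then have "W h > W 0" using z by simp
  moreover have "W h \<le> W 0" using mx hp by auto
  ultimately show False by simp
qed

lemma mono_deriv_nonneg:
  fixes g :: "real \<Rightarrow> real"
  assumes dp: "\<delta> > 0" and mono: "\<forall>\<tau>. 0 < \<tau> \<and> \<tau> < \<delta> \<longrightarrow> g 0 \<le> g \<tau>"
    and dg: "(g has_real_derivative d) (at 0)"
  shows "d \<ge> 0"
proof (rule ccontr)
  assume "\<not> d \<ge> 0"
  then have "d < 0" by simp
  from DERIV_neg_dec_right[OF dg this] obtain d' where
    d': "d' > 0" "\<forall>h>0. h < d' \<longrightarrow> g 0 > g (0 + h)" by blast
  define h where "h = min d' \<delta> / 2"
  have "0 < h" "h < d'" "h < \<delta>" using d' dp by (auto simp: h_def)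
  then show False using d' mono by force
qed

definition bil :: "real^2^2 \<Rightarrow> real^2 \<Rightarrow> real^2 \<Rightarrow> real" where
  "bil H u v = u$1 * v$1 * H$1$1 + u$1 * v$2 * H$1$2 + u$2 * v$1 * H$2$1 + u$2 * v$2 * H$2$2"

lemma qf_comb:
  assumes "H$1$2 = H$2$1"
  shows "qf H (\<alpha> *\<^sub>R u + \<beta> *\<^sub>R v) = qf H u * \<alpha>^2 + 2 * bil H u v * \<alpha> * \<beta> + qf H v * \<beta>^2"
  using assms by (simp add: qf_def bil_def power2_eq_square algebra_simps)

lemma qf_det:
  assumes "H$1$2 = H$2$1"
  shows "qf H u * qf H v - (bil H u v)^2 = (u$1 * v$2 - u$2 * v$1)^2 * det H"
proof -
  have e: "H$2$1 = H$1$2" using assms by simp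
  show ?thesis unfolding qf_def bil_def det_2 power2_eq_square e by algebra
qed

lemma psd_det_mono:
  fixes A B C P R S c :: real
  assumes A0: "A \<ge> 0" and dt: "A * C - B^2 \<ge> c" and c0: "c > 0"
    and le: "\<forall>\<alpha> \<beta>. A*\<alpha>^2 + 2*B*\<alpha>*\<beta> + C*\<beta>^2 \<le> P*\<alpha>^2 + 2*R*\<alpha>*\<beta> + S*\<beta>^2"
  shows "P * S - R^2 \<ge> c"
proof -
  define x where "x = P - A"
  define y where "y = S - C"
  define z where "z = R - B"
  have q: "x*\<alpha>^2 + 2*z*\<alpha>*\<beta> + y*\<beta>^2 \<ge> 0" for \<alpha> \<beta>
  proof -
    have "A*\<alpha>^2 + 2*B*\<alpha>*\<beta> + C*\<beta>^2 \<le> P*\<alpha>^2 + 2*R*\<alpha>*\<beta> + S*\<beta>^2" using le by blast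
    moreover have "x*\<alpha>^2 + 2*z*\<alpha>*\<beta> + y*\<beta>^2 = (P*\<alpha>^2 + 2*R*\<alpha>*\<beta> + S*\<beta>^2) - (A*\<alpha>^2 + 2*B*\<alpha>*\<beta> + C*\<beta>^2)"
      by (simp add: x_def y_def z_def algebra_simps)
    ultimately show ?thesis by linarith
  qed
  have x0: "x \<ge> 0" using q[of 1 0] by simp
  have y0: "y \<ge> 0" using q[of 0 1] by simp
  have zxy: "z^2 \<le> x*y"
  proof (cases "x > 0")
    case True
    have "x*(-z)^2 + 2*z*(-z)*x + y*x^2 = x * (x*y - z^2)" by (simp add: power2_eq_square algebra_simps)
    then have "x * (x*y - z^2) \<ge> 0" using q[of "-z" x] by linarith
    then show ?thesis using True by (simp add: zero_le_mult_iff)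
  next
    case False
    then have x00: "x = 0" using x0 by simp
    have "z = 0"
    proof (rule ccontr)
      assume zn: "z \<noteq> 0"
      have "0 \<le> x*(-(y+1)/(2*z))^2 + 2*z*(-(y+1)/(2*z))*1 + y*1^2" by (rule q)
      also have "\<dots> = -1" using zn x00 by (simp add: field_simps)
      finally show False by simp
    qed
    then show ?thesis using x00 by simp
  qed
  have B2: "B^2 \<le> A*C" using dt c0 by simp
  have Ap: "A > 0"
  proof (rule ccontr)
    assume "\<not> A > 0" then have "A = 0" using A0 by simp
    then have "- (B^2) \<ge> c" using dt by simp
    moreover have "B^2 \<ge> 0" by simp
    ultimately show False using c0 by linarith
  qed
  have Cp: "C > 0"
  proof (rule ccontr)
    assume "\<not> C > 0" then have "A * C \<le> 0" using Ap by (simp add: mult_nonneg_nonpos)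
    moreover have "B^2 \<ge> 0" by simp
    ultimately show False using dt c0 by linarith
  qed
  have "(B*z)^2 = B^2 * z^2" by (simp add: power_mult_distrib)
  also have "\<dots> \<le> (A*C) * (x*y)"
    by (rule mult_mono[OF B2 zxy]) (use Ap Cp in auto)
  also have "\<dots> \<le> ((A*y + C*x)/2)^2"
  proof -
    have "((A*y + C*x)/2)^2 - (A*C)*(x*y) = ((A*y - C*x)/2)^2" by (simp add: power2_eq_square field_simps)
    moreover have "((A*y - C*x)/2)^2 \<ge> 0" by simp
    ultimately show ?thesis by linarith
  qed
  finally have "\<bar>B*z\<bar> \<le> \<bar>(A*y + C*x)/2\<bar>" using abs_le_square_iff by blast
  moreover have "(A*y + C*x)/2 \<ge> 0" using Ap Cp x0 y0 by simp
  ultimately have "B*z \<le> (A*y + C*x)/2" by linarith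
  moreover have "2*B*z = 2*(B*z)" by simp
  ultimately have bz: "2*B*z \<le> A*y + C*x" by argo
  have "P*S - R^2 = (A*C - B^2) + (A*y + C*x - 2*B*z) + (x*y - z^2)"
    by (simp add: x_def y_def z_def power2_eq_square algebra_simps)
  then show ?thesis using dt bz zxy by linarith
qed

definition T1 :: "real \<Rightarrow> real" where "T1 t = t * (- ln t)"
definition T1d :: "real \<Rightarrow> real" where "T1d t = - ln t - 1"
definition T2 :: "real \<Rightarrow> real" where "T2 t = t * ln (- ln t)"
definition T2d :: "real \<Rightarrow> real" where "T2d t = ln (- ln t) + 1 / ln t"
definition T2dd :: "real \<Rightarrow> real" where "T2dd t = 1 / (t * ln t) - 1 / (t * (ln t)^2)"

lemma T1_deriv: "t > 0 \<Longrightarrow> (T1 has_real_derivative T1d t) (at t)"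
  unfolding T1_def T1d_def by (auto intro!: derivative_eq_intros simp: field_simps)

lemma T1d_deriv: "t > 0 \<Longrightarrow> (T1d has_real_derivative (- 1 / t)) (at t)"
  unfolding T1d_def by (auto intro!: derivative_eq_intros simp: field_simps)

lemma ln_neg: "0 < t \<Longrightarrow> t < 1 \<Longrightarrow> ln t < (0::real)" by simp

lemma T2_deriv: "0 < t \<Longrightarrow> t < 1 \<Longrightarrow> (T2 has_real_derivative T2d t) (at t)"
  unfolding T2_def T2d_def using ln_neg[of t]
  by (auto intro!: derivative_eq_intros simp: field_simps)

lemma T2d_deriv: "0 < t \<Longrightarrow> t < 1 \<Longrightarrow> (T2d has_real_derivative T2dd t) (at t)"
  unfolding T2d_def T2dd_def using ln_neg[of t]
  by (auto intro!: derivative_eq_intros simp: field_simps power2_eq_square)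

lemma T1_lim: "(T1 \<longlongrightarrow> 0) (at_right 0)"
  unfolding T1_def by real_asymp

lemma T2_lim: "(T2 \<longlongrightarrow> 0) (at_right 0)"
  unfolding T2_def by real_asymp

lemma cont_at0_right:
  fixes T :: "real \<Rightarrow> real"
  assumes lim: "(T \<longlongrightarrow> 0) (at_right 0)" and T0: "T 0 = 0"
    and ct: "\<And>t. 0 < t \<Longrightarrow> t < 1 \<Longrightarrow> isCont T t" and b: "b < 1" and b0: "0 < b"
  shows "continuous_on {0..b} T"
proof (clarsimp simp: continuous_on_eq_continuous_within)
  fix x assume x: "0 \<le> x" "x \<le> b"
  show "continuous (at x within {0..b}) T"
  proof (cases "x = 0")
    case True
    have "(T \<longlongrightarrow> T 0) (at 0 within {0..b})"
      using lim T0 at_within_Icc_at_right[OF b0] by simp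
    then show ?thesis using True by (simp add: continuous_within)
  next
    case False
    then have "isCont T x" using ct x b by auto
    then show ?thesis by (simp add: continuous_at_imp_continuous_at_within)
  qed
qed

lemma T1_cont: "0 < b \<Longrightarrow> b < 1 \<Longrightarrow> continuous_on {0..b} T1"
  by (rule cont_at0_right[OF T1_lim]) (auto simp: T1_def intro: DERIV_isCont T1_deriv)

lemma T2_cont: "0 < b \<Longrightarrow> b < 1 \<Longrightarrow> continuous_on {0..b} T2"
  by (rule cont_at0_right[OF T2_lim]) (auto simp: T2_def intro: DERIV_isCont T2_deriv)

lemma T1_chain: "(g has_real_derivative g') (at x) \<Longrightarrow> 0 < g x \<Longrightarrow>
   ((\<lambda>x. T1 (g x)) has_real_derivative T1d (g x) * g') (at x)"
  using DERIV_chain2[OF T1_deriv] by blast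
lemma T1d_chain: "(g has_real_derivative g') (at x) \<Longrightarrow> 0 < g x \<Longrightarrow>
   ((\<lambda>x. T1d (g x)) has_real_derivative (-1 / g x) * g') (at x)"
  using DERIV_chain2[OF T1d_deriv] by blast
lemma T2_chain: "(g has_real_derivative g') (at x) \<Longrightarrow> 0 < g x \<Longrightarrow> g x < 1 \<Longrightarrow>
   ((\<lambda>x. T2 (g x)) has_real_derivative T2d (g x) * g') (at x)"
  using DERIV_chain2[OF T2_deriv] by blast
lemma T2d_chain: "(g has_real_derivative g') (at x) \<Longrightarrow> 0 < g x \<Longrightarrow> g x < 1 \<Longrightarrow>
   ((\<lambda>x. T2d (g x)) has_real_derivative T2dd (g x) * g') (at x)"
  using DERIV_chain2[OF T2d_deriv] by blast

definition Psi :: "real \<Rightarrow> real \<Rightarrow> real \<Rightarrow> real \<Rightarrow> real \<Rightarrow> real \<Rightarrow> real" where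
  "Psi K \<mu> la lb s t = K * t + \<mu> * s^2 * T1 t - la * (T2 t - t * lb)"

definition Psi1 :: "real \<Rightarrow> real \<Rightarrow> real \<Rightarrow> real \<Rightarrow> real \<Rightarrow> real \<Rightarrow> real \<Rightarrow> real \<Rightarrow> real \<Rightarrow> real" where
  "Psi1 K \<mu> la lb s0 t0 \<alpha> \<beta> \<tau> = K * \<beta> + \<mu> * (2 * (s0+\<tau> * \<alpha>) * \<alpha> * T1 (t0+\<tau> * \<beta>) + (s0+\<tau> * \<alpha>)^2 * (T1d (t0+\<tau> * \<beta>) * \<beta>))
     - la * (T2d (t0+\<tau> * \<beta>) * \<beta> - \<beta> * lb)"

lemma Psi_line_deriv:
  assumes "0 < t0+\<tau> * \<beta>" "t0+\<tau> * \<beta> < 1"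
  shows "((\<lambda>\<tau>. Psi K \<mu> la lb (s0+\<tau> * \<alpha>) (t0+\<tau> * \<beta>)) has_real_derivative Psi1 K \<mu> la lb s0 t0 \<alpha> \<beta> \<tau>) (at \<tau>)"
  unfolding Psi_def Psi1_def using assms
  by (auto intro!: derivative_eq_intros T1_chain T2_chain simp: power2_eq_square algebra_simps)

lemma Psi1_deriv:
  assumes "0 < t0" "t0 < 1"
  shows "(Psi1 K \<mu> la lb s0 t0 \<alpha> \<beta> has_real_derivative
     (2 * \<mu> * T1 t0) * \<alpha>^2 + 2 * (2 * \<mu> * s0 * T1d t0) * \<alpha> * \<beta> + (\<mu> * s0^2 * (-1/t0) - la * T2dd t0) * \<beta>^2) (at 0)"
proof -
  have "(Psi1 K \<mu> la lb s0 t0 \<alpha> \<beta> has_real_derivative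
     \<mu> * (2 * \<alpha> * \<alpha> * T1 (t0+0 * \<beta>) + 2 * (s0+0 * \<alpha>) * \<alpha> * (T1d (t0+0 * \<beta>) * \<beta>)
        + (2 * (s0+0 * \<alpha>) * \<alpha> * (T1d (t0+0 * \<beta>) * \<beta>) + (s0+0 * \<alpha>)^2 * ((-1/(t0+0 * \<beta>)) * \<beta> * \<beta>)))
     - la * (T2dd (t0+0 * \<beta>) * \<beta> * \<beta>)) (at 0)"
    unfolding Psi1_def[abs_def] using assms
    by (rule_tac derivative_eq_intros T1_chain T1d_chain T2d_chain refl | simp)+
  then show ?thesis by (simp add: power2_eq_square algebra_simps)
qed

lemma Psi_det_bound:
  assumes t0: "0 < t0" "t0 \<le> exp (-1)" and mu: "\<mu> > 0" and la: "la > 0"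
  shows "(2 * \<mu> * T1 t0) * (\<mu> * s0^2 * (-1/t0) - la * T2dd t0) - (2 * \<mu> * s0 * T1d t0)^2 \<le> 4 * \<mu> * la"
proof -
  define L where "L = - ln t0"
  have "ln t0 \<le> -1" using t0 by (metis ln_exp ln_mono exp_gt_zero)
  then have L1: "L \<ge> 1" by (simp add: L_def)
  have lt: "ln t0 = -L" by (simp add: L_def)
  have e1: "(2 * \<mu> * T1 t0) * (\<mu> * s0^2 * (-1/t0)) = - 2 * \<mu>^2 * s0^2 * L"
    using t0 by (simp add: T1_def lt power2_eq_square field_simps)
  have e2: "(2 * \<mu> * T1 t0) * (- la * T2dd t0) = 2 * \<mu> * la * ((L+1)/L)"
    using t0 L1 by (simp add: T1_def T2dd_def lt power2_eq_square field_simps)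
  have "(L+1)/L \<le> 2" using L1 by (simp add: field_simps)
  then have "(2 * \<mu> * la) * ((L+1)/L) \<le> (2 * \<mu> * la) * 2" using mu la by (intro mult_left_mono) auto
  then have "2 * \<mu> * la * ((L+1)/L) \<le> 4 * \<mu> * la" by simp
  moreover have "- 2 * \<mu>^2 * s0^2 * L \<le> 0" using L1 by simp
  moreover have "(2 * \<mu> * s0 * T1d t0)^2 \<ge> 0" by simp
  moreover have "(2 * \<mu> * T1 t0) * (\<mu> * s0^2 * (-1/t0) - la * T2dd t0)
     = (2 * \<mu> * T1 t0) * (\<mu> * s0^2 * (-1/t0)) + (2 * \<mu> * T1 t0) * (- la * T2dd t0)" by (simp add: algebra_simps)
  ultimately show ?thesis using e1 e2 by linarith
qed

definition perp :: "real^2 \<Rightarrow> real^2" where "perp e = vector [-(e$2), e$1]"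

lemma perp_nth [simp]: "perp e $ 1 = - (e$2)" "perp e $ 2 = e$1"
  by (simp_all add: perp_def)

lemma perp_inner: "e \<bullet> perp e = 0" "perp e \<bullet> e = 0" "perp e \<bullet> perp e = e \<bullet> e"
  by (simp_all add: inner2 algebra_simps)

lemma decomp2:
  assumes "e \<noteq> (0::real^2)"
  shows "d = ((d \<bullet> e) / (e \<bullet> e)) *\<^sub>R e + ((d \<bullet> perp e) / (e \<bullet> e)) *\<^sub>R perp e"
proof -
  have E: "e \<bullet> e \<noteq> 0" using assms by simp
  have c1: "(d \<bullet> e) * e$1 + (d \<bullet> perp e) * (-(e$2)) = d$1 * (e \<bullet> e)"
    by (simp add: inner2 algebra_simps)
  have c2: "(d \<bullet> e) * e$2 + (d \<bullet> perp e) * e$1 = d$2 * (e \<bullet> e)"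
    by (simp add: inner2 algebra_simps)
  have "((d \<bullet> e) / (e \<bullet> e)) * e$1 + ((d \<bullet> perp e) / (e \<bullet> e)) * (-(e$2)) = d$1"
    using c1 E by (simp add: field_simps)
  moreover have "((d \<bullet> e) / (e \<bullet> e)) * e$2 + ((d \<bullet> perp e) / (e \<bullet> e)) * e$1 = d$2"
    using c2 E by (simp add: field_simps)
  ultimately show ?thesis unfolding vec2_eq by simp
qed

lemma cross2_perp: "cross2 e d = d \<bullet> perp e"
  by (simp add: cross2_def inner2 algebra_simps)

locale setting =
  fixes n :: nat and p :: "nat \<Rightarrow> real^2" and b :: "nat \<Rightarrow> real" and A :: real
    and U :: "(real^2) set" and \<phi> :: "real^2 \<Rightarrow> real" and i :: nat and ustar :: "real^2"
  assumes poly: "ccw_convex_polygon n p"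
    and U_def: "U = interior (convex hull (p ` {1..n}))"
    and A: "A \<ge> 0"
    and cont: "continuous_on (closure U) \<phi>"
    and conv: "convex_on (closure U) \<phi>"
    and smooth: "smooth_on U \<phi>"
    and MA: "\<forall>u\<in>U. det (hessian \<phi> u) = Vpot A n p u"
    and vert: "\<forall>k\<in>{1..n}. \<phi> (p k) = b k"
    and edge: "\<forall>k\<in>{1..n}. \<exists>a c. \<forall>x\<in>closed_segment (p k) (p (cyc_succ n k)). \<phi> x = a \<bullet> x + c"
    and iin: "i \<in> {1..n}"
    and ustar: "ustar \<in> open_segment (p i) (p (cyc_succ n i))"
begin

definition "si = cyc_succ n i"
definition "e = p si - p i"
definition "w = perp e"
definition "E = e \<bullet> e"
definition "cc = b si - b i"
definition "Lin y = b i + cc * (((y - p i) \<bullet> e) / E)"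
definition "h y = \<phi> y - Lin y"
definition "X s t = ustar + s *\<^sub>R e + t *\<^sub>R w"
definition "sc y = ((y - ustar) \<bullet> e) / E"
definition "tc y = ((y - ustar) \<bullet> w) / E"

lemma n3: "3 \<le> n" using poly by (simp add: ccw_convex_polygon_def)
lemma si_in: "si \<in> {1..n}" using iin n3 by (auto simp: si_def cyc_succ_def)
lemma si_ne: "si \<noteq> i" using iin n3 by (auto simp: si_def cyc_succ_def)
lemma e_ne: "e \<noteq> 0"
proof -
  have "inj_on p {1..n}" using poly by (simp add: ccw_convex_polygon_def)
  then have "p si \<noteq> p i" using si_in si_ne iin by (meson inj_on_def)
  then show ?thesis by (simp add: e_def)
qed
lemma E_pos: "E > 0" using e_ne by (simp add: E_def)
lemma ew: "e \<bullet> w = 0" "w \<bullet> e = 0" "w \<bullet> w = E" by (simp_all add: w_def E_def perp_inner)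
lemma norm_w: "norm w = norm e" using ew by (simp add: norm_eq_sqrt_inner E_def)
lemma E_norm: "E = (norm e)^2" by (simp add: E_def power2_norm_eq_inner)

lemma open_U: "open U" by (simp add: U_def)

lemma theta: "\<exists>\<theta>. 0 < \<theta> \<and> \<theta> < 1 \<and> ustar = p i + \<theta> *\<^sub>R e"
proof -
  from ustar obtain u where "0 < u" "u < 1" "ustar = (1 - u) *\<^sub>R p i + u *\<^sub>R p si"
    by (auto simp: in_segment si_def)
  then show ?thesis by (intro exI[of _ u]) (auto simp: e_def algebra_simps)
qed

lemma decomp: "y = X (sc y) (tc y)"
proof -
  have "y - ustar = sc y *\<^sub>R e + tc y *\<^sub>R w"
    using decomp2[OF e_ne, of "y - ustar"] by (simp add: sc_def tc_def E_def w_def)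
  then show ?thesis by (simp add: X_def algebra_simps)
qed

lemma sc_X [simp]: "sc (X s t) = s" and tc_X [simp]: "tc (X s t) = t"
  using E_pos by (simp_all add: sc_def tc_def X_def inner_add_left ew E_def)

lemma cross_w: "(y - p i) \<bullet> w = tc y * E"
proof -
  obtain \<theta> where "ustar = p i + \<theta> *\<^sub>R e" using theta by blast
  then have "(y - p i) \<bullet> w = (y - ustar) \<bullet> w" by (simp add: inner_diff_left inner_add_left ew)
  then show ?thesis using E_pos by (simp add: tc_def)
qed

lemma hull_half: "convex hull (p ` {1..n}) \<subseteq> {y. w \<bullet> y \<ge> w \<bullet> p i}"
proof (rule hull_minimal)
  show "convex {y. w \<bullet> y \<ge> w \<bullet> p i}" by (rule convex_halfspace_ge)
  show "p ` {1..n} \<subseteq> {y. w \<bullet> y \<ge> w \<bullet> p i}"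
  proof
    fix y assume "y \<in> p ` {1..n}"
    then obtain j where j: "j \<in> {1..n}" "y = p j" by auto
    consider "j = i" | "j = si" | "j \<noteq> i" "j \<noteq> si" by blast
    then show "y \<in> {y. w \<bullet> y \<ge> w \<bullet> p i}"
    proof cases
      case 1 then show ?thesis using j by simp
    next
      case 2
      have "w \<bullet> (p si - p i) = 0" using ew by (simp add: e_def inner_commute)
      then show ?thesis using j 2 by (simp add: inner_diff_right)
    next
      case 3
      have "cross2 (p si - p i) (p j - p i) > 0"
        using poly iin j 3 unfolding ccw_convex_polygon_def si_def by blast
      then have "(p j - p i) \<bullet> w > 0" by (simp add: cross2_perp w_def e_def)
      then have "p j \<bullet> w - p i \<bullet> w > 0" by (simp add: inner_diff_left)
      moreover have "w \<bullet> p j = p j \<bullet> w" "w \<bullet> p i = p i \<bullet> w" by (simp_all add: inner_commute)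
      ultimately show ?thesis using j by simp
    qed
  qed
qed

lemma G1: "y \<in> U \<Longrightarrow> tc y > 0"
proof -
  assume y: "y \<in> U"
  have w0: "w \<noteq> 0" using ew E_pos by auto
  have "U \<subseteq> interior {y. w \<bullet> y \<ge> w \<bullet> p i}" unfolding U_def by (rule interior_mono[OF hull_half])
  then have "w \<bullet> y > w \<bullet> p i" using y w0 by auto
  then have "(y - p i) \<bullet> w > 0" by (simp add: inner_diff_left inner_commute)
  then show ?thesis using cross_w E_pos by (simp add: zero_less_mult_iff)
qed

end

context setting begin

lemma third_vertex: "\<exists>j\<in>{1..n}. j \<noteq> i \<and> j \<noteq> si"
proof -
  have "\<exists>j\<in>{1::nat,2,3}. j \<noteq> i \<and> j \<noteq> si" by auto
  then show ?thesis using n3 by auto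
qed

lemma G2: "\<exists>r>0. \<forall>y. dist y ustar < r \<longrightarrow>
   (tc y > 0 \<longrightarrow> y \<in> U) \<and> (tc y = 0 \<longrightarrow> y \<in> closed_segment (p i) (p si))"
proof -
  obtain j where j: "j \<in> {1..n}" "j \<noteq> i" "j \<noteq> si" using third_vertex by blast
  define f where "f = p j - p i"
  define \<kappa> where "\<kappa> = f \<bullet> w"
  have "cross2 (p si - p i) (p j - p i) > 0"
    using poly iin j unfolding ccw_convex_polygon_def si_def by blast
  then have kp: "\<kappa> > 0" by (simp add: cross2_perp \<kappa>_def f_def w_def e_def)
  define l2 where "l2 y = ((y - p i) \<bullet> w) / \<kappa>" for y
  define l1 where "l1 y = (((y - p i) - l2 y *\<^sub>R f) \<bullet> e) / E" for y
  have ident: "y = p i + l1 y *\<^sub>R e + l2 y *\<^sub>R f" for y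
  proof -
    define d where "d = (y - p i) - l2 y *\<^sub>R f"
    have "d \<bullet> w = 0" using kp by (simp add: d_def l2_def inner_diff_left \<kappa>_def)
    then have "d = l1 y *\<^sub>R e"
      using decomp2[OF e_ne, of d] by (simp add: l1_def d_def E_def w_def)
    then show ?thesis by (simp add: d_def algebra_simps)
  qed
  have cl2: "continuous_on UNIV l2" unfolding l2_def using kp by (intro continuous_intros) auto
  have cl1: "continuous_on UNIV l1" unfolding l1_def l2_def using kp E_pos by (intro continuous_intros) auto
  define Oset where "Oset = {y. 0 < l1 y} \<inter> {y. l1 y + l2 y < 1}"
  have oO: "open Oset" unfolding Oset_def
    by (intro open_Int open_Collect_less continuous_intros cl1 cl2)
  obtain \<theta> where th: "0 < \<theta>" "\<theta> < 1" "ustar = p i + \<theta> *\<^sub>R e" using theta by blast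
  have l2u: "l2 ustar = 0" using th by (simp add: l2_def ew)
  have l1u: "l1 ustar = \<theta>" unfolding l1_def l2u using th E_pos by (simp add: E_def)
  have "ustar \<in> Oset" using th l1u l2u by (simp add: Oset_def)
  then obtain r where r: "r > 0" "ball ustar r \<subseteq> Oset" using oO openE by blast
  define T where "T = {y. 0 < l1 y} \<inter> {y. 0 < l2 y} \<inter> {y. l1 y + l2 y < 1}"
  have oT: "open T" unfolding T_def
    by (intro open_Int open_Collect_less continuous_intros cl1 cl2)
  have "T \<subseteq> convex hull {p i, p si, p j}"
  proof
    fix y assume y: "y \<in> T"
    have "y = (1 - l1 y - l2 y) *\<^sub>R p i + l1 y *\<^sub>R p si + l2 y *\<^sub>R p j"
      using ident[of y] by (simp add: e_def f_def algebra_simps)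
    then have "\<exists>u v w. y = u *\<^sub>R p i + v *\<^sub>R p si + w *\<^sub>R p j \<and> 0 \<le> u \<and> 0 \<le> v \<and> 0 \<le> w \<and> u + v + w = 1"
      apply (rule_tac x="1 - l1 y - l2 y" in exI)
      apply (rule_tac x="l1 y" in exI)
      apply (rule_tac x="l2 y" in exI)
      using y by (auto simp: T_def)
    then show "y \<in> convex hull {p i, p si, p j}" unfolding convex_hull_3 by blast
  qed
  also have "\<dots> \<subseteq> convex hull (p ` {1..n})"
    by (rule hull_mono) (use iin si_in j in auto)
  finally have TU: "T \<subseteq> U" unfolding U_def using oT interior_maximal by blast
  show ?thesis
  proof (intro exI[of _ r] conjI allI impI r(1))
    fix y assume d: "dist y ustar < r" and t: "tc y > 0"
    have "y \<in> Oset" using d r by (auto simp: dist_commute)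
    moreover have "l2 y > 0" using t kp E_pos by (simp add: l2_def cross_w)
    ultimately show "y \<in> U" using TU by (auto simp: Oset_def T_def)
  next
    fix y assume d: "dist y ustar < r" and t: "tc y = 0"
    have "y \<in> Oset" using d r by (auto simp: dist_commute)
    moreover have "l2 y = 0" using t by (simp add: l2_def cross_w)
    ultimately have "0 < l1 y" "l1 y < 1" "y = p i + l1 y *\<^sub>R e" using ident[of y] by (auto simp: Oset_def)
    then show "y \<in> closed_segment (p i) (p si)" unfolding in_segment
      by (intro exI[of _ "l1 y"]) (auto simp: e_def algebra_simps)
  qed
qed

lemma edge_h: "y \<in> closed_segment (p i) (p si) \<Longrightarrow> h y = 0"
proof -
  assume y: "y \<in> closed_segment (p i) (p si)"
  obtain a c where ac: "\<forall>x\<in>closed_segment (p i) (p si). \<phi> x = a \<bullet> x + c"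
    using edge iin unfolding si_def by blast
  obtain u where u: "0 \<le> u" "u \<le> 1" "y = (1 - u) *\<^sub>R p i + u *\<^sub>R p si" using y by (auto simp: in_segment)
  have "\<phi> (p i) = a \<bullet> p i + c" "\<phi> (p si) = a \<bullet> p si + c" using ac by auto
  moreover have "\<phi> (p i) = b i" "\<phi> (p si) = b si" using vert iin si_in by auto
  moreover have "\<phi> y = a \<bullet> y + c" using ac y by auto
  moreover have "a \<bullet> y = (1 - u) * (a \<bullet> p i) + u * (a \<bullet> p si)" using u(3) by (simp add: inner_add_right)
  ultimately have py: "\<phi> y = (1 - u) * b i + u * b si" by (simp add: algebra_simps)
  have "y - p i = u *\<^sub>R e" using u by (simp add: e_def algebra_simps)
  then have "Lin y = b i + cc * u" using E_pos by (simp add: Lin_def E_def)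
  then show ?thesis using py by (simp add: h_def cc_def algebra_simps)
qed

lemma Ck3: "Ck_on 3 U \<phi>" using smooth by (simp add: smooth_on_def)

lemma SM1: "y \<in> U \<Longrightarrow> \<phi> differentiable (at y)"
  using Ck3 open_U by (simp add: numeral_3_eq_3 differentiable_on_eq_differentiable_at)

lemma SM2: "y \<in> U \<Longrightarrow> (\<lambda>y. grad \<phi> y $ j) differentiable (at y)"
  using Ck3 open_U by (simp add: numeral_3_eq_3 differentiable_on_eq_differentiable_at)

lemma SM3: "continuous_on U (\<lambda>y. hessian \<phi> y $ j $ k)"
proof -
  have "continuous_on U (\<lambda>y. grad (\<lambda>y. grad \<phi> y $ j) y $ k)"
    using Ck3 by (simp add: numeral_3_eq_3)
  then show ?thesis by (simp add: grad_comp_hess)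
qed

lemma symm: "y \<in> U \<Longrightarrow> hessian \<phi> y $ 1 $ 2 = hessian \<phi> y $ 2 $ 1"
  by (rule schwarz[OF open_U]) (auto intro: SM1 SM2 SM3)

lemma convex_U: "convex U" unfolding U_def by (simp add: convex_convex_hull)

lemma C1:
  assumes x: "x \<in> U" and y: "y \<in> closure U"
  shows "\<phi> y - \<phi> x \<ge> grad \<phi> x \<bullet> (y - x)"
proof (cases "y = x")
  case True then show ?thesis by simp
next
  case False
  define v where "v = y - x"
  have vn: "norm v > 0" using False by (simp add: v_def)
  obtain \<epsilon> where ep: "\<epsilon> > 0" "ball x \<epsilon> \<subseteq> U" using x open_U openE by blast
  define \<delta> where "\<delta> = \<epsilon> / (2 * norm v)"
  have dp: "\<delta> > 0" using ep vn by (simp add: \<delta>_def)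
  have inU: "x + \<tau> *\<^sub>R v \<in> closure U" if "-\<delta> \<le> \<tau>" "\<tau> \<le> 1" for \<tau>
  proof (cases "\<tau> \<le> 0")
    case True
    have "norm (\<tau> *\<^sub>R v) = \<bar>\<tau>\<bar> * norm v" by simp
    also have "\<dots> \<le> \<delta> * norm v" using True that vn by (intro mult_right_mono) auto
    also have "\<dots> < \<epsilon>" using ep vn by (simp add: \<delta>_def)
    finally have "x + \<tau> *\<^sub>R v \<in> ball x \<epsilon>" by (simp add: dist_norm)
    then show ?thesis using ep closure_subset by blast
  next
    case False
    have "x + \<tau> *\<^sub>R v = (1 - \<tau>) *\<^sub>R x + \<tau> *\<^sub>R y" by (simp add: v_def algebra_simps)
    moreover have "convex (closure U)" using convex_U by simp
    ultimately show ?thesis using False that x y closure_subset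
      by (metis convex_alt less_eq_real_def not_le subsetD)
  qed
  define g where "g \<tau> = \<phi> (x + \<tau> *\<^sub>R v)" for \<tau>
  have gc: "convex_on {-\<delta>..1} g"
  proof (rule convex_onI)
    fix t a c :: real assume t: "0 < t" "t < 1" and a: "a \<in> {-\<delta>..1}" and c: "c \<in> {-\<delta>..1}"
    have "x + ((1 - t) *\<^sub>R a + t *\<^sub>R c) *\<^sub>R v = (1 - t) *\<^sub>R (x + a *\<^sub>R v) + t *\<^sub>R (x + c *\<^sub>R v)"
      by (simp add: algebra_simps)
    then show "g ((1 - t) *\<^sub>R a + t *\<^sub>R c) \<le> (1 - t) * g a + t * g c"
      unfolding g_def using convex_onD[OF conv, of t "x + a *\<^sub>R v" "x + c *\<^sub>R v"] t a c inU by auto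
  qed simp
  have gd: "(g has_real_derivative grad \<phi> x \<bullet> v) (at 0)"
    unfolding g_def using dir_deriv[of \<phi> x 0 v] SM1[OF x] by simp
  have "g 1 - g 0 \<ge> (grad \<phi> x \<bullet> v) * (1 - 0)"
    by (rule convex_on_imp_above_tangent[OF gc]) (use dp in \<open>auto intro: has_field_derivative_at_within[OF gd]\<close>)
  then show ?thesis by (simp add: g_def v_def)
qed

lemma C2:
  assumes x: "x \<in> U"
  shows "qf (hessian \<phi> x) v \<ge> 0"
proof -
  obtain \<epsilon> where ep: "\<epsilon> > 0" "ball x \<epsilon> \<subseteq> U" using x open_U openE by blast
  define \<delta> where "\<delta> = \<epsilon> / (norm v + 1)"
  have "norm v + 1 > 0" by (smt (verit) norm_ge_zero)
  then have dp: "\<delta> > 0" using ep by (simp add: \<delta>_def)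
  have inU: "x + \<tau> *\<^sub>R v \<in> U" if "0 \<le> \<tau>" "\<tau> < \<delta>" for \<tau>
  proof -
    have "norm (\<tau> *\<^sub>R v) = \<tau> * norm v" using that by simp
    also have "\<dots> \<le> \<delta> * norm v" using that by (intro mult_right_mono) auto
    also have "\<dots> < \<epsilon>"
    proof -
      have "\<epsilon> * norm v < \<epsilon> * (norm v + 1)" using ep by simp
      then show ?thesis using \<open>norm v + 1 > 0\<close> by (simp add: \<delta>_def pos_divide_less_eq)
    qed
    finally show ?thesis using ep by (auto simp: dist_norm)
  qed
  define g1 where "g1 \<tau> = grad \<phi> (x + \<tau> *\<^sub>R v) \<bullet> v" for \<tau>
  have d: "(g1 has_real_derivative qf (hessian \<phi> x) v) (at 0)"
    unfolding g1_def using dir_deriv2[of \<phi> x 0 v] SM2[OF x] by simp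
  have mono: "g1 0 \<le> g1 \<tau>" if "0 < \<tau>" "\<tau> < \<delta>" for \<tau>
  proof -
    have y: "x + \<tau> *\<^sub>R v \<in> U" using inU that by simp
    have a: "\<phi> (x + \<tau> *\<^sub>R v) - \<phi> x \<ge> grad \<phi> x \<bullet> (\<tau> *\<^sub>R v)"
      using C1[OF x, of "x + \<tau> *\<^sub>R v"] y closure_subset by auto
    have b: "\<phi> x - \<phi> (x + \<tau> *\<^sub>R v) \<ge> grad \<phi> (x + \<tau> *\<^sub>R v) \<bullet> (- (\<tau> *\<^sub>R v))"
      using C1[OF y, of x] x closure_subset by auto
    have "\<tau> * (g1 \<tau> - g1 0) \<ge> 0" using a b by (simp add: g1_def algebra_simps)
    then show ?thesis using that by (simp add: zero_le_mult_iff)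
  qed
  show ?thesis by (rule mono_deriv_nonneg[OF dp _ d]) (use mono in auto)
qed

end

context setting begin

lemma U_ne: "U \<noteq> {}"
proof -
  obtain r where r: "r > 0" "\<forall>y. dist y ustar < r \<longrightarrow> (tc y > 0 \<longrightarrow> y \<in> U)" using G2 by blast
  define t where "t = r / (2 * norm w)"
  have nw: "norm w > 0" using norm_w e_ne by simp
  have "dist (X 0 t) ustar = t * norm w" using r nw by (simp add: X_def dist_norm t_def)
  also have "\<dots> < r" using r nw by (simp add: t_def)
  finally have "X 0 t \<in> U" using r nw by (simp add: t_def)
  then show ?thesis by blast
qed

lemma closure_U: "closure U = convex hull (p ` {1..n})"
proof -
  have cx: "convex (convex hull (p ` {1..n}))" by (simp add: convex_convex_hull)
  have "compact (convex hull (p ` {1..n}))" by (intro compact_convex_hull finite_imp_compact) simp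
  then have cl: "closed (convex hull (p ` {1..n}))" by (rule compact_imp_closed)
  have "closure U = closure (convex hull (p ` {1..n}))"
    unfolding U_def by (rule convex_closure_interior[OF cx]) (use U_ne U_def in simp)
  then show ?thesis using cl by simp
qed

lemma seg_closure: "closed_segment (p i) (p si) \<subseteq> closure U"
  unfolding closure_U
  by (rule closed_segment_subset) (use iin si_in in \<open>auto intro: hull_inc simp: convex_convex_hull\<close>)

lemma X_dist: "dist (X s t) ustar \<le> (\<bar>s\<bar> + \<bar>t\<bar>) * norm e"
proof -
  have "dist (X s t) ustar = norm (s *\<^sub>R e + t *\<^sub>R w)" by (simp add: X_def dist_norm)
  also have "\<dots> \<le> norm (s *\<^sub>R e) + norm (t *\<^sub>R w)" by (rule norm_triangle_ineq)
  also have "\<dots> = (\<bar>s\<bar> + \<bar>t\<bar>) * norm e" by (simp add: norm_w algebra_simps)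
  finally show ?thesis .
qed

lemma Lin_X: "Lin (X s t) = Lin (X s 0)"
  by (simp add: Lin_def X_def inner_diff_left inner_add_left ew)

lemma Lin_line: "Lin (x + \<tau> *\<^sub>R v) = Lin x + \<tau> * (cc * ((v \<bullet> e) / E))"
  using E_pos by (simp add: Lin_def inner_diff_left inner_add_left field_simps)

lemma X_line: "X (s0 + \<tau> * \<alpha>) (t0 + \<tau> * \<beta>) = X s0 t0 + \<tau> *\<^sub>R (\<alpha> *\<^sub>R e + \<beta> *\<^sub>R w)"
  by (simp add: X_def algebra_simps)

lemma h_cont: "continuous_on (closure U) h"
  unfolding h_def Lin_def using E_pos by (intro continuous_intros cont) auto

lemma V_lower:
  assumes "x \<in> U" "dist x ustar \<le> r" "r \<ge> 0"
  shows "Vpot A n p x \<ge> 1 / (2 * (norm (ustar - p i) + r))"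
proof -
  have xp: "x \<noteq> p i"
  proof
    assume "x = p i"
    then have "tc x = 0" using cross_w[of x] E_pos by simp
    then show False using G1[OF assms(1)] by simp
  qed
  have "norm (x - p i) \<le> norm (x - ustar) + norm (ustar - p i)" using norm_triangle_ineq[of "x - ustar" "ustar - p i"] by simp
  also have "\<dots> \<le> norm (ustar - p i) + r" using assms by (simp add: dist_norm)
  finally have nle: "norm (x - p i) \<le> norm (ustar - p i) + r" .
  have np: "norm (x - p i) > 0" using xp by simp
  have "1 / (2 * (norm (ustar - p i) + r)) \<le> 1 / (2 * norm (x - p i))"
    using nle np by (intro frac_le) auto
  also have "\<dots> \<le> (\<Sum>k=1..n. 1 / (2 * norm (x - p k)))"
    by (rule member_le_sum[of i "{1..n}" "\<lambda>k. 1 / (2 * norm (x - p k))"]) (use iin in auto)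
  also have "\<dots> \<le> Vpot A n p x" using A by (simp add: Vpot_def)
  finally show ?thesis .
qed

end

context setting begin

lemma comparison:
  "\<exists>bt K la lb. 0 < bt \<and> bt \<le> exp (-1) \<and> 0 < la \<and>
     (\<forall>t. 0 < t \<and> t \<le> bt \<longrightarrow> h (X 0 t) \<le> K * t - la * (T2 t - t * lb))"
proof -
  obtain r where r: "r > 0" "\<forall>y. dist y ustar < r \<longrightarrow>
     (tc y > 0 \<longrightarrow> y \<in> U) \<and> (tc y = 0 \<longrightarrow> y \<in> closed_segment (p i) (p si))"
    using G2 by blast
  have ne: "norm e > 0" using e_ne by simp
  define a where "a = r / (3 * norm e)"
  have apos: "a > 0" using r ne by (simp add: a_def)
  define bt where "bt = min a (exp (-1))"
  have btpos: "bt > 0" using apos by (simp add: bt_def)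
  have bta: "bt \<le> a" and bte: "bt \<le> exp (-1)" by (simp_all add: bt_def)
  have e1: "exp (-1::real) < 1" by simp
  have bt1: "bt < 1" using bte e1 by linarith
  have inball: "dist (X s t) ustar < r" if "\<bar>s\<bar> \<le> a" "\<bar>t\<bar> \<le> a" for s t
  proof -
    have "dist (X s t) ustar \<le> (\<bar>s\<bar> + \<bar>t\<bar>) * norm e" by (rule X_dist)
    also have "\<dots> \<le> (2 * a) * norm e" using that ne by (intro mult_right_mono) auto
    also have "\<dots> < r" using r ne by (simp add: a_def)
    finally show ?thesis .
  qed
  have XU: "X s t \<in> U" if "\<bar>s\<bar> \<le> a" "0 < t" "t \<le> bt" for s t
    using r inball[of s t] that bta by auto
  have Xseg: "X s 0 \<in> closed_segment (p i) (p si)" if "\<bar>s\<bar> \<le> a" for s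
    using r inball[of s 0] that apos by auto
  have h0: "h (X s 0) = 0" if "\<bar>s\<bar> \<le> a" for s using edge_h Xseg that by blast
  define D where "D = {-a..a} \<times> {0..bt}"
  have XD: "X (fst z) (snd z) \<in> closure U" if "z \<in> D" for z
  proof (cases "snd z = 0")
    case True
    have "\<bar>fst z\<bar> \<le> a" using that by (auto simp: D_def)
    then have "X (fst z) 0 \<in> closure U" using Xseg[of "fst z"] seg_closure by blast
    then show ?thesis using True by simp
  next
    case False
    have "\<bar>fst z\<bar> \<le> a" "0 < snd z" "snd z \<le> bt" using that False by (auto simp: D_def)
    then show ?thesis using XU[of "fst z" "snd z"] closure_subset by blast
  qed
  define F0 where "F0 z = h (X (fst z) (snd z))" for z
  have cX: "continuous_on D (\<lambda>z. X (fst z) (snd z))" unfolding X_def by (intro continuous_intros)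
  have cF0: "continuous_on D F0" unfolding F0_def
    by (rule continuous_on_compose2[OF h_cont cX]) (use XD in auto)
  have cD: "compact D" unfolding D_def by (intro compact_Times compact_Icc)
  have "bounded (F0 ` D)" by (intro compact_imp_bounded compact_continuous_image cF0 cD)
  then obtain M where M: "M > 0" "\<forall>z\<in>D. \<bar>F0 z\<bar> \<le> M" by (auto simp: bounded_pos)
  define K where "K = M / bt"
  define c0 where "c0 = 1 / (2 * (norm (ustar - p i) + r))"
  have "norm (ustar - p i) + r > 0" using r by (smt (verit) norm_ge_zero)
  then have c0pos: "c0 > 0" by (simp add: c0_def)
  define c where "c = min 1 (E^2 * c0)"
  have cpos: "c > 0" using c0pos E_pos by (simp add: c_def)
  have c1: "c \<le> 1" by (simp add: c_def)
  define \<mu> where "\<mu> = c / (4 * a)"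
  define la where "la = c * a / 4"
  have mupos: "\<mu> > 0" using cpos apos by (simp add: \<mu>_def)
  have lapos: "la > 0" using cpos apos by (simp add: la_def)
  have mula: "\<mu> * a^2 = la" using apos by (simp add: \<mu>_def la_def power2_eq_square)
  define lb where "lb = ln (- ln bt)"
  have lnbt: "ln bt \<le> -1" using bte btpos by (metis ln_exp ln_mono exp_gt_zero)
  have lb0: "lb \<ge> 0" using lnbt by (simp add: lb_def)
  define Ps where "Ps z = Psi K \<mu> la lb (fst z) (snd z)" for z
  have sD: "snd ` D \<subseteq> {0..bt}" by (auto simp: D_def)
  have cT1: "continuous_on D (\<lambda>z. T1 (snd z))"
    by (rule continuous_on_compose2[OF T1_cont[OF btpos bt1]]) (use sD in \<open>auto intro: continuous_intros\<close>)
  have cT2: "continuous_on D (\<lambda>z. T2 (snd z))"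
    by (rule continuous_on_compose2[OF T2_cont[OF btpos bt1]]) (use sD in \<open>auto intro: continuous_intros\<close>)
  have cPs: "continuous_on D Ps" unfolding Ps_def Psi_def
    by (intro continuous_intros cT1 cT2)
  define Wf where "Wf z = F0 z - Ps z" for z
  have cW: "continuous_on D Wf" unfolding Wf_def by (intro continuous_intros cF0 cPs)
  have Fle: "F0 z \<le> K * snd z" if z: "z \<in> D" for z
  proof -
    obtain s t where st: "z = (s, t)" by (cases z)
    have s: "\<bar>s\<bar> \<le> a" and t: "0 \<le> t" "t \<le> bt" using z st by (auto simp: D_def)
    show ?thesis
    proof (cases "t = 0")
      case True then show ?thesis using h0 s st by (simp add: F0_def)
    next
      case False
      define l where "l = t / bt"
      have l: "0 \<le> l" "l \<le> 1" using t btpos by (auto simp: l_def)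
      have Xeq: "X s t = (1 - l) *\<^sub>R X s 0 + l *\<^sub>R X s bt"
        using btpos by (simp add: X_def l_def algebra_simps)
      have cv: "\<phi> (X s t) \<le> (1 - l) * \<phi> (X s 0) + l * \<phi> (X s bt)"
        unfolding Xeq
        by (rule convex_onD[OF conv l]) (use XD[of "(s,0)"] XD[of "(s,bt)"] s btpos in \<open>auto simp: D_def abs_le_iff\<close>)
      have "\<phi> (X s 0) = Lin (X s 0)" using h0[OF s] by (simp add: h_def)
      moreover have "\<phi> (X s bt) - Lin (X s 0) \<le> M"
        using M(2)[rule_format, of "(s, bt)"] s btpos Lin_X[of s bt] by (auto simp: D_def F0_def h_def abs_le_iff)
      ultimately have ph: "\<phi> (X s t) \<le> Lin (X s 0) + l * (\<phi> (X s bt) - Lin (X s 0))"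
        using cv by (simp add: algebra_simps)
      have "l * (\<phi> (X s bt) - Lin (X s 0)) \<le> l * M"
        using \<open>\<phi> (X s bt) - Lin (X s 0) \<le> M\<close> l by (intro mult_left_mono) auto
      then have "\<phi> (X s t) - Lin (X s 0) \<le> l * M" using ph by linarith
      then show ?thesis using Lin_X[of s t] btpos by (simp add: st F0_def h_def l_def K_def field_simps)
    qed
  qed
  have "D \<noteq> {}" using apos btpos by (auto simp: D_def)
  then obtain z0 where z0: "z0 \<in> D" "\<forall>z\<in>D. Wf z \<le> Wf z0"
    using continuous_attains_sup[OF cD _ cW] by blast
  have Wmax: "Wf z0 \<le> 0"
  proof (rule ccontr)
    assume "\<not> Wf z0 \<le> 0"
    then have Wpos: "Wf z0 > 0" by simp
    obtain s0 t0 where st0: "z0 = (s0, t0)" by (cases z0)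
    have s0: "\<bar>s0\<bar> \<le> a" and t0: "0 \<le> t0" "t0 \<le> bt" using z0 st0 by (auto simp: D_def)
    have t0ne: "t0 \<noteq> 0"
    proof
      assume "t0 = 0"
      then have "Wf z0 = 0" using h0[OF s0] st0 by (simp add: Wf_def F0_def Ps_def Psi_def T1_def T2_def)
      then show False using Wpos by simp
    qed
    have t0ne2: "t0 \<noteq> bt"
    proof
      assume tb: "t0 = bt"
      have "T2 bt = bt * lb" by (simp add: T2_def lb_def)
      moreover have "T1 bt \<ge> 0"
      proof -
        have "bt * ln bt \<le> 0" using btpos bt1 by (simp add: mult_le_0_iff)
        then show ?thesis using bt1 by (simp add: T1_def)
      qed
      ultimately have "Ps z0 \<ge> K * bt" using st0 tb mupos by (simp add: Ps_def Psi_def)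
      moreover have "F0 z0 \<le> K * bt" using Fle[OF z0(1)] st0 tb by simp
      ultimately show False using Wpos by (simp add: Wf_def)
    qed
    have s0ne: "\<bar>s0\<bar> \<noteq> a"
    proof
      assume sa: "\<bar>s0\<bar> = a"
      have tp: "t0 > 0" using t0 t0ne by simp
      define L where "L = - ln t0"
      have lt0: "ln t0 \<le> ln bt" using tp t0 by simp
      have Lpos: "L > 0" using lt0 lnbt by (simp add: L_def)
      have lnL: "ln L \<le> L - 1" using Lpos by (rule ln_le_minus_one)
      have s2: "s0^2 = a^2" using sa by (metis power2_abs)
      have "Ps z0 - K * t0 = la * (t0 * (L - ln L + lb))"
        using st0 s2 mula by (simp add: Ps_def Psi_def T1_def T2_def L_def algebra_simps)
      moreover have "t0 * (L - ln L + lb) \<ge> 0" using tp lnL lb0 by simp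
      ultimately have "Ps z0 \<ge> K * t0" using lapos by (smt (verit) mult_nonneg_nonneg)
      moreover have "F0 z0 \<le> K * t0" using Fle[OF z0(1)] st0 by simp
      ultimately show False using Wpos by (simp add: Wf_def)
    qed
    have s0i: "\<bar>s0\<bar> < a" using s0 s0ne by simp
    have t0i: "0 < t0" "t0 < bt" using t0 t0ne t0ne2 by auto
    define x0 where "x0 = X s0 t0"
    have x0U: "x0 \<in> U" using XU[of s0 t0] s0 t0i by (simp add: x0_def)
    define P where "P = 2 * \<mu> * T1 t0"
    define R where "R = 2 * \<mu> * s0 * T1d t0"
    define S where "S = \<mu> * s0^2 * (-1/t0) - la * T2dd t0"
    define H where "H = hessian \<phi> x0"
    have quad: "qf H (\<alpha> *\<^sub>R e + \<beta> *\<^sub>R w) \<le> P * \<alpha>^2 + 2 * R * \<alpha> * \<beta> + S * \<beta>^2" for \<alpha> \<beta>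
    proof -
      define v where "v = \<alpha> *\<^sub>R e + \<beta> *\<^sub>R w"
      define \<delta> where "\<delta> = min (a - \<bar>s0\<bar>) (min t0 (bt - t0)) / (\<bar>\<alpha>\<bar> + \<bar>\<beta>\<bar> + 1)"
      have den: "\<bar>\<alpha>\<bar> + \<bar>\<beta>\<bar> + 1 > 0" by (smt (verit) abs_ge_zero)
      have mpos: "min (a - \<bar>s0\<bar>) (min t0 (bt - t0)) > 0" using s0i t0i by simp
      have dp: "\<delta> > 0" using den mpos by (simp add: \<delta>_def)
      have small: "\<bar>\<tau> * \<alpha>\<bar> < a - \<bar>s0\<bar> \<and> \<bar>\<tau> * \<beta>\<bar> < t0 \<and> \<bar>\<tau> * \<beta>\<bar> < bt - t0" if "\<bar>\<tau>\<bar> < \<delta>" for \<tau>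
      proof -
        have "\<bar>\<tau>\<bar> * (\<bar>\<alpha>\<bar> + \<bar>\<beta>\<bar> + 1) < min (a - \<bar>s0\<bar>) (min t0 (bt - t0))"
          using that den by (simp add: \<delta>_def pos_less_divide_eq)
        moreover have "\<bar>\<tau> * \<alpha>\<bar> \<le> \<bar>\<tau>\<bar> * (\<bar>\<alpha>\<bar> + \<bar>\<beta>\<bar> + 1)" "\<bar>\<tau> * \<beta>\<bar> \<le> \<bar>\<tau>\<bar> * (\<bar>\<alpha>\<bar> + \<bar>\<beta>\<bar> + 1)"
          by (simp_all add: abs_mult mult_left_mono)
        ultimately show ?thesis by linarith
      qed
      have inD: "(s0 + \<tau> * \<alpha>, t0 + \<tau> * \<beta>) \<in> D" if "\<bar>\<tau>\<bar> < \<delta>" for \<tau>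
        using small[OF that] by (auto simp: D_def)
      have tr: "0 < t0 + \<tau> * \<beta>" "t0 + \<tau> * \<beta> < 1" "\<bar>s0 + \<tau> * \<alpha>\<bar> \<le> a" "t0 + \<tau> * \<beta> \<le> bt" if "\<bar>\<tau>\<bar> < \<delta>" for \<tau>
        using small[OF that] bt1 by auto
      define W where "W \<tau> = Wf (s0 + \<tau> * \<alpha>, t0 + \<tau> * \<beta>)" for \<tau>
      have Weq: "W \<tau> = \<phi> (x0 + \<tau> *\<^sub>R v) - (Lin x0 + \<tau> * (cc * ((v \<bullet> e) / E)))
                 - Psi K \<mu> la lb (s0 + \<tau> * \<alpha>) (t0 + \<tau> * \<beta>)" for \<tau>
        by (simp add: W_def Wf_def F0_def Ps_def h_def X_line x0_def v_def Lin_line)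
      define W1 where "W1 \<tau> = grad \<phi> (x0 + \<tau> *\<^sub>R v) \<bullet> v - cc * ((v \<bullet> e) / E)
                 - Psi1 K \<mu> la lb s0 t0 \<alpha> \<beta> \<tau>" for \<tau>
      have mx: "\<forall>\<tau>. \<bar>\<tau>\<bar> < \<delta> \<longrightarrow> W \<tau> \<le> W 0"
        using z0(2) inD st0 by (simp add: W_def)
      have dW: "\<forall>\<tau>. \<bar>\<tau>\<bar> < \<delta> \<longrightarrow> (W has_real_derivative W1 \<tau>) (at \<tau>)"
      proof (intro allI impI)
        fix \<tau> assume ta: "\<bar>\<tau>\<bar> < \<delta>"
        have "x0 + \<tau> *\<^sub>R v \<in> U"
          using XU[of "s0 + \<tau> * \<alpha>" "t0 + \<tau> * \<beta>"] tr[OF ta] by (simp add: X_line x0_def v_def)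
        then have d1: "((\<lambda>\<tau>. \<phi> (x0 + \<tau> *\<^sub>R v)) has_real_derivative grad \<phi> (x0 + \<tau> *\<^sub>R v) \<bullet> v) (at \<tau>)"
          using dir_deriv[of \<phi> x0 \<tau> v] SM1 by simp
        have d3: "((\<lambda>\<tau>. Psi K \<mu> la lb (s0 + \<tau> * \<alpha>) (t0 + \<tau> * \<beta>)) has_real_derivative
             Psi1 K \<mu> la lb s0 t0 \<alpha> \<beta> \<tau>) (at \<tau>)"
          by (rule Psi_line_deriv) (use tr[OF ta] in auto)
        have "((\<lambda>\<tau>. \<phi> (x0 + \<tau> *\<^sub>R v) - (Lin x0 + \<tau> * (cc * ((v \<bullet> e) / E)))
                 - Psi K \<mu> la lb (s0 + \<tau> * \<alpha>) (t0 + \<tau> * \<beta>)) has_real_derivative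
              grad \<phi> (x0 + \<tau> *\<^sub>R v) \<bullet> v - (0 + 1 * (cc * ((v \<bullet> e) / E))) - Psi1 K \<mu> la lb s0 t0 \<alpha> \<beta> \<tau>) (at \<tau>)"
          using DERIV_cmult_right[OF DERIV_ident, of "cc * ((v \<bullet> e) / E)" \<tau>]
          by (intro derivative_intros d1 d3)
        then show "(W has_real_derivative W1 \<tau>) (at \<tau>)"
          unfolding Weq[abs_def] W1_def by simp
      qed
      have dW1: "(W1 has_real_derivative qf H v - 0 - (P * \<alpha>^2 + 2 * R * \<alpha> * \<beta> + S * \<beta>^2)) (at 0)"
      proof -
        have d1: "((\<lambda>\<tau>. grad \<phi> (x0 + \<tau> *\<^sub>R v) \<bullet> v) has_real_derivative qf H v) (at 0)"
          using dir_deriv2[of \<phi> x0 0 v] SM2[OF x0U] by (simp add: H_def)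
        have d3: "(Psi1 K \<mu> la lb s0 t0 \<alpha> \<beta> has_real_derivative P * \<alpha>^2 + 2 * R * \<alpha> * \<beta> + S * \<beta>^2) (at 0)"
          using Psi1_deriv[of t0 K \<mu> la lb s0 \<alpha> \<beta>] t0i bt1 by (simp add: P_def R_def S_def)
        show ?thesis unfolding W1_def[abs_def] by (intro derivative_intros d1 d3)
      qed
      have "qf H v - 0 - (P * \<alpha>^2 + 2 * R * \<alpha> * \<beta> + S * \<beta>^2) \<le> 0"
        by (rule second_deriv_max[OF dp mx dW dW1])
      then show ?thesis by (simp add: v_def)
    qed
    have sym: "H$1$2 = H$2$1" using symm[OF x0U] by (simp add: H_def)
    have quad2: "\<forall>\<alpha> \<beta>. qf H e * \<alpha>^2 + 2 * bil H e w * \<alpha> * \<beta> + qf H w * \<beta>^2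
                     \<le> P * \<alpha>^2 + 2 * R * \<alpha> * \<beta> + S * \<beta>^2"
      using quad qf_comb[OF sym] by metis
    have Aq: "qf H e \<ge> 0" using C2[OF x0U] by (simp add: H_def)
    have ew2: "e$1 * w$2 - e$2 * w$1 = E" by (simp add: w_def E_def inner2)
    have "qf H e * qf H w - (bil H e w)^2 = E^2 * det H" using qf_det[OF sym, of e w] ew2 by simp
    moreover have "det H \<ge> c0"
    proof -
      have "dist x0 ustar \<le> r" using inball[of s0 t0] s0 t0 bta by (simp add: x0_def)
      then have "Vpot A n p x0 \<ge> c0" using V_lower[OF x0U] r by (simp add: c0_def)
      then show ?thesis using MA x0U by (simp add: H_def)
    qed
    ultimately have "qf H e * qf H w - (bil H e w)^2 \<ge> c"
      using E_pos by (smt (verit) c_def mult_left_mono zero_le_power2)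
    then have ge: "P * S - R^2 \<ge> c" using psd_det_mono[OF Aq _ cpos quad2] by blast
    have le: "P * S - R^2 \<le> 4 * \<mu> * la"
      using Psi_det_bound[of t0 \<mu> la s0] t0i bte mupos lapos by (simp add: P_def R_def S_def)
    have "4 * \<mu> * la = c^2 / 4" using apos by (simp add: \<mu>_def la_def power2_eq_square)
    moreover have "c^2 / 4 < c" using cpos c1 by (simp add: power2_eq_square)
    ultimately show False using ge le by linarith
  qed
  show ?thesis
  proof (intro exI conjI allI impI)
    show "0 < bt" "bt \<le> exp (-1)" "0 < la" by (fact btpos bte lapos)+
  next
    fix t assume t: "0 < t \<and> t \<le> bt"
    have "(0, t) \<in> D" using t apos by (auto simp: D_def)
    then have "Wf (0, t) \<le> 0" using z0 Wmax by fastforce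
    then show "h (X 0 t) \<le> K * t - la * (T2 t - t * lb)"
      by (simp add: Wf_def F0_def Ps_def Psi_def)
  qed
qed

end

context setting begin

lemma cont_pt:
  fixes g :: "real^2 \<Rightarrow> real"
  assumes "continuous_on (closure U) g" "y0 \<in> closure U" "\<epsilon> > 0"
  shows "\<exists>d>0. \<forall>y\<in>closure U. dist y y0 < d \<longrightarrow> \<bar>g y - g y0\<bar> < \<epsilon>"
proof -
  have "\<forall>x\<in>closure U. \<forall>\<epsilon>>0. \<exists>\<delta>>0. \<forall>x'\<in>closure U. dist x' x < \<delta> \<longrightarrow> dist (g x') (g x) < \<epsilon>"
    using assms(1) by (simp add: continuous_on_iff)
  then obtain d where "d > 0" "\<forall>y\<in>closure U. dist y y0 < d \<longrightarrow> dist (g y) (g y0) < \<epsilon>"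
    using assms(2,3) by blast
  then show ?thesis by (auto simp: dist_real_def)
qed

lemma sc_bound: "\<bar>sc u\<bar> * norm e \<le> dist u ustar"
proof -
  have ne: "norm e > 0" using e_ne by simp
  have "\<bar>(u - ustar) \<bullet> e\<bar> \<le> norm (u - ustar) * norm e" by (rule Cauchy_Schwarz_ineq2)
  then have "\<bar>sc u\<bar> * E \<le> norm (u - ustar) * norm e" using E_pos by (simp add: sc_def abs_div)
  then have "\<bar>sc u\<bar> * norm e * norm e \<le> norm (u - ustar) * norm e" by (simp add: E_norm power2_eq_square mult.assoc)
  then show ?thesis using ne by (simp add: dist_norm)
qed

lemma tc_bound: "\<bar>tc u\<bar> * norm e \<le> dist u ustar"
proof -
  have ne: "norm e > 0" using e_ne by simp
  have "\<bar>(u - ustar) \<bullet> w\<bar> \<le> norm (u - ustar) * norm w" by (rule Cauchy_Schwarz_ineq2)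
  then have "\<bar>tc u\<bar> * E \<le> norm (u - ustar) * norm e" using E_pos by (simp add: tc_def abs_div norm_w)
  then have "\<bar>tc u\<bar> * norm e * norm e \<le> norm (u - ustar) * norm e" by (simp add: E_norm power2_eq_square mult.assoc)
  then show ?thesis using ne by (simp add: dist_norm)
qed

lemma ustar_cl: "ustar \<in> closure U" and h_ustar: "h ustar = 0"
proof -
  have "ustar \<in> closed_segment (p i) (p si)" using ustar open_closed_segment by (auto simp: si_def)
  then show "ustar \<in> closure U" "h ustar = 0" using seg_closure edge_h by auto
qed

lemma normal_part: "\<forall>Z. \<exists>d>0. \<forall>u\<in>U. dist u ustar < d \<longrightarrow> grad \<phi> u \<bullet> w \<le> - Z"
proof
  fix Z :: real
  define N where "N = \<bar>Z\<bar> + 1"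
  have Npos: "N > 0" by (simp add: N_def)
  obtain bt K la lb where cmp: "0 < bt" "bt \<le> exp (-1)" "0 < la"
     "\<forall>t. 0 < t \<and> t \<le> bt \<longrightarrow> h (X 0 t) \<le> K * t - la * (T2 t - t * lb)"
    using comparison by blast
  obtain r where r: "r > 0" "\<forall>y. dist y ustar < r \<longrightarrow>
     (tc y > 0 \<longrightarrow> y \<in> U) \<and> (tc y = 0 \<longrightarrow> y \<in> closed_segment (p i) (p si))"
    using G2 by blast
  have ne: "norm e > 0" using e_ne by simp
  define Zq where "Zq = lb + (K + 3 * N) / la"
  define \<sigma> where "\<sigma> = min (min bt (exp (- exp Zq))) (r / (2 * norm e))"
  have sp: "\<sigma> > 0" using cmp r ne by (simp add: \<sigma>_def)
  have sbt: "\<sigma> \<le> bt" by (simp add: \<sigma>_def)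
  have "\<sigma> \<le> r / (2 * norm e)" by (simp add: \<sigma>_def)
  then have "\<sigma> * norm e \<le> r / (2 * norm e) * norm e" using ne by (intro mult_right_mono) auto
  then have sr: "\<sigma> * norm e \<le> r / 2" using ne by simp
  have "ln \<sigma> \<le> ln (exp (- exp Zq))" using sp by (subst ln_le_cancel_iff) (auto simp: \<sigma>_def)
  then have "- ln \<sigma> \<ge> exp Zq" by simp
  then have lnl: "ln (- ln \<sigma>) \<ge> Zq" by (metis exp_gt_zero ln_exp ln_mono)
  have hs: "h (X 0 \<sigma>) \<le> -3 * N * \<sigma>"
  proof -
    have "h (X 0 \<sigma>) \<le> K * \<sigma> - la * (T2 \<sigma> - \<sigma> * lb)" using cmp(4) sp sbt by blast
    also have "\<dots> = \<sigma> * (K - la * (ln (- ln \<sigma>) - lb))" by (simp add: T2_def algebra_simps)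
    also have "\<dots> \<le> \<sigma> * (K - la * (Zq - lb))"
      using lnl cmp(3) sp by (intro mult_left_mono) auto
    also have "\<dots> = -3 * N * \<sigma>" using cmp(3) by (simp add: Zq_def field_simps)
    finally show ?thesis .
  qed
  have X0U: "X 0 \<sigma> \<in> U"
  proof -
    have "dist (X 0 \<sigma>) ustar \<le> (\<bar>0\<bar> + \<bar>\<sigma>\<bar>) * norm e" by (rule X_dist)
    then have "dist (X 0 \<sigma>) ustar < r" using sr sp r by simp
    then show ?thesis using r sp by simp
  qed
  obtain d1 where d1: "d1 > 0" "\<forall>y\<in>closure U. dist y (X 0 \<sigma>) < d1 \<longrightarrow> \<bar>h y - h (X 0 \<sigma>)\<bar> < N * \<sigma> / 2"
    using cont_pt[OF h_cont, of "X 0 \<sigma>" "N * \<sigma> / 2"] X0U closure_subset Npos sp by auto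
  obtain d2 where d2: "d2 > 0" "\<forall>y\<in>closure U. dist y ustar < d2 \<longrightarrow> \<bar>h y - h ustar\<bar> < N * \<sigma> / 2"
    using cont_pt[OF h_cont ustar_cl, of "N * \<sigma> / 2"] Npos sp by auto
  define d where "d = min (min (r / 2) d1) (min d2 (\<sigma> * norm e))"
  have dp: "d > 0" using r d1 d2 sp ne by (simp add: d_def)
  show "\<exists>d>0. \<forall>u\<in>U. dist u ustar < d \<longrightarrow> grad \<phi> u \<bullet> w \<le> - Z"
  proof (intro exI[of _ d] conjI ballI impI dp)
    fix u assume uU: "u \<in> U" and du: "dist u ustar < d"
    define s where "s = sc u"
    define t where "t = tc u"
    have ut: "u = X s t" using decomp by (simp add: s_def t_def)
    have tp: "t > 0" using G1[OF uU] by (simp add: t_def)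
    have tl: "t < \<sigma>"
    proof -
      have "\<bar>t\<bar> * norm e < \<sigma> * norm e" using tc_bound[of u] du by (simp add: t_def d_def)
      then show ?thesis using ne tp by simp
    qed
    have sl: "\<bar>s\<bar> * norm e < r / 2" "\<bar>s\<bar> * norm e < d1"
      using sc_bound[of u] du by (auto simp: s_def d_def)
    define q where "q = X s \<sigma>"
    have dq: "dist q (X 0 \<sigma>) = \<bar>s\<bar> * norm e" by (simp add: q_def X_def dist_norm)
    have qU: "q \<in> U"
    proof -
      have "dist q ustar \<le> dist q (X 0 \<sigma>) + dist (X 0 \<sigma>) ustar" by (rule dist_triangle)
      also have "dist (X 0 \<sigma>) ustar \<le> (\<bar>0\<bar> + \<bar>\<sigma>\<bar>) * norm e" by (rule X_dist)
      finally have "dist q ustar < r" using dq sl sr sp by simp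
      then show ?thesis using r sp by (simp add: q_def)
    qed
    have "\<phi> q - \<phi> u \<ge> grad \<phi> u \<bullet> (q - u)" using C1[OF uU] qU closure_subset by blast
    moreover have "q - u = (\<sigma> - t) *\<^sub>R w" by (simp add: q_def ut X_def algebra_simps)
    moreover have "Lin q = Lin u" using Lin_X[of s \<sigma>] Lin_X[of s t] by (simp add: q_def ut)
    ultimately have key: "h q - h u \<ge> (\<sigma> - t) * (grad \<phi> u \<bullet> w)" by (simp add: h_def)
    have "q \<in> closure U" using qU closure_subset by blast
    then have "\<bar>h q - h (X 0 \<sigma>)\<bar> < N * \<sigma> / 2" using d1(2) dq sl by simp
    moreover have "u \<in> closure U" using uU closure_subset by blast
    then have "\<bar>h u - h ustar\<bar> < N * \<sigma> / 2" using d2(2) du by (simp add: d_def)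
    ultimately have "h q - h u < -2 * N * \<sigma>" using hs h_ustar by linarith
    then have A1: "(\<sigma> - t) * (grad \<phi> u \<bullet> w) < -2 * N * \<sigma>" using key by linarith
    show "grad \<phi> u \<bullet> w \<le> - Z"
    proof (rule ccontr)
      assume "\<not> grad \<phi> u \<bullet> w \<le> - Z"
      then have g: "grad \<phi> u \<bullet> w > -2 * N" using Npos by (simp add: N_def)
      have "(\<sigma> - t) * (-2 * N) \<le> (\<sigma> - t) * (grad \<phi> u \<bullet> w)"
        using g tl by (intro mult_left_mono) auto
      moreover have "(\<sigma> - t) * (-2 * N) \<ge> -2 * N * \<sigma>" using tp Npos by (simp add: algebra_simps)
      ultimately show False using A1 by linarith
    qed
  qed
qed

end

context setting begin

lemma Lin_X0: "Lin (X s 0) = Lin ustar + s * cc"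
  using Lin_line[of ustar s e] E_pos by (simp add: X_def E_def)

lemma tangential_part: "\<forall>\<epsilon>>0. \<exists>d>0. \<forall>u\<in>U. dist u ustar < d \<longrightarrow> \<bar>grad \<phi> u \<bullet> e - cc\<bar> < \<epsilon>"
proof (intro allI impI)
  fix \<epsilon> :: real assume ep: "\<epsilon> > 0"
  obtain r where r: "r > 0" "\<forall>y. dist y ustar < r \<longrightarrow>
     (tc y > 0 \<longrightarrow> y \<in> U) \<and> (tc y = 0 \<longrightarrow> y \<in> closed_segment (p i) (p si))"
    using G2 by blast
  have ne: "norm e > 0" using e_ne by simp
  define \<delta> where "\<delta> = r / (4 * norm e)"
  have dp: "\<delta> > 0" using r ne by (simp add: \<delta>_def)
  have dn: "\<delta> * norm e = r / 4" using ne by (simp add: \<delta>_def)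
  define Pp where "Pp = X \<delta> 0"
  define Pm where "Pm = X (-\<delta>) 0"
  have dPp: "dist Pp ustar = r / 4" using dp dn by (simp add: Pp_def X_def dist_norm)
  have dPm: "dist Pm ustar = r / 4" using dp dn by (simp add: Pm_def X_def dist_norm)
  have Ppseg: "Pp \<in> closed_segment (p i) (p si)" using r dPp by (simp add: Pp_def)
  have Pmseg: "Pm \<in> closed_segment (p i) (p si)" using r dPm by (simp add: Pm_def)
  have Ppc: "Pp \<in> closure U" and Pmc: "Pm \<in> closure U" using Ppseg Pmseg seg_closure by auto
  have phPp: "\<phi> Pp = \<phi> ustar + \<delta> * cc"
    using edge_h[OF Ppseg] h_ustar Lin_X0[of \<delta>] by (simp add: h_def Pp_def)
  have phPm: "\<phi> Pm = \<phi> ustar - \<delta> * cc"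
    using edge_h[OF Pmseg] h_ustar Lin_X0[of "-\<delta>"] by (simp add: h_def Pm_def)
  define \<eta> where "\<eta> = \<epsilon> * \<delta> / 3"
  have etap: "\<eta> > 0" using ep dp by (simp add: \<eta>_def)
  obtain d1 where d1: "d1 > 0" "\<forall>y\<in>closure U. dist y Pp < d1 \<longrightarrow> \<bar>\<phi> y - \<phi> Pp\<bar> < \<eta>"
    using cont_pt[OF cont Ppc etap] by blast
  obtain d2 where d2: "d2 > 0" "\<forall>y\<in>closure U. dist y Pm < d2 \<longrightarrow> \<bar>\<phi> y - \<phi> Pm\<bar> < \<eta>"
    using cont_pt[OF cont Pmc etap] by blast
  obtain d3 where d3: "d3 > 0" "\<forall>y\<in>closure U. dist y ustar < d3 \<longrightarrow> \<bar>\<phi> y - \<phi> ustar\<bar> < \<eta>"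
    using cont_pt[OF cont ustar_cl etap] by blast
  define d where "d = min (r / 4) (min d1 (min d2 d3))"
  have dpos: "d > 0" using r d1 d2 d3 by (simp add: d_def)
  show "\<exists>d>0. \<forall>u\<in>U. dist u ustar < d \<longrightarrow> \<bar>grad \<phi> u \<bullet> e - cc\<bar> < \<epsilon>"
  proof (intro exI[of _ d] conjI ballI impI dpos)
    fix u assume uU: "u \<in> U" and du: "dist u ustar < d"
    have tp: "tc u > 0" using G1[OF uU] .
    have inU: "u + k *\<^sub>R e \<in> U" if "\<bar>k\<bar> = \<delta>" for k
    proof -
      have "tc (u + k *\<^sub>R e) = tc u" by (simp add: tc_def inner_diff_left inner_add_left ew)
      moreover have "dist (u + k *\<^sub>R e) ustar < r"
      proof -
        have "dist (u + k *\<^sub>R e) ustar \<le> dist u ustar + norm (k *\<^sub>R e)"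
          by (metis dist_norm dist_triangle2 add_diff_cancel_left' diff_add_eq dist_commute)
        also have "norm (k *\<^sub>R e) = r / 4" using that dn by simp
        finally have "dist (u + k *\<^sub>R e) ustar \<le> dist u ustar + r / 4" .
        moreover have "dist u ustar < r / 4" using du by (simp add: d_def)
        ultimately show ?thesis using r by linarith
      qed
      ultimately show ?thesis using r tp by auto
    qed
    have uc: "u \<in> closure U" using uU closure_subset by blast
    have qpU: "u + \<delta> *\<^sub>R e \<in> U" using inU[of \<delta>] dp by simp
    have qmU: "u + (-\<delta>) *\<^sub>R e \<in> U" using inU[of "-\<delta>"] dp by simp
    have a1: "\<phi> (u + \<delta> *\<^sub>R e) - \<phi> u \<ge> \<delta> * (grad \<phi> u \<bullet> e)"
      using C1[OF uU, of "u + \<delta> *\<^sub>R e"] qpU closure_subset by auto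
    have a2: "\<phi> (u + (-\<delta>) *\<^sub>R e) - \<phi> u \<ge> - \<delta> * (grad \<phi> u \<bullet> e)"
      using C1[OF uU, of "u + (-\<delta>) *\<^sub>R e"] qmU closure_subset by auto
    have "dist (u + \<delta> *\<^sub>R e) Pp = dist u ustar" by (simp add: Pp_def X_def dist_norm algebra_simps)
    moreover have "u + \<delta> *\<^sub>R e \<in> closure U" using qpU closure_subset by blast
    ultimately have b1: "\<bar>\<phi> (u + \<delta> *\<^sub>R e) - \<phi> Pp\<bar> < \<eta>"
      using d1(2) du by (simp add: d_def)
    have "dist (u + (-\<delta>) *\<^sub>R e) Pm = dist u ustar" by (simp add: Pm_def X_def dist_norm algebra_simps)
    moreover have "u + (-\<delta>) *\<^sub>R e \<in> closure U" using qmU closure_subset by blast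
    ultimately have b2: "\<bar>\<phi> (u + (-\<delta>) *\<^sub>R e) - \<phi> Pm\<bar> < \<eta>"
      using d2(2) du by (simp add: d_def)
    have b3: "\<bar>\<phi> u - \<phi> ustar\<bar> < \<eta>" using d3(2) uc du by (auto simp: d_def)
    have b1': "\<phi> (u + \<delta> *\<^sub>R e) < \<phi> Pp + \<eta>" using b1 by (simp add: abs_less_iff)
    have b2': "\<phi> (u + (-\<delta>) *\<^sub>R e) < \<phi> Pm + \<eta>" using b2 by (simp add: abs_less_iff)
    have b3': "\<phi> ustar - \<eta> < \<phi> u" using b3 by (simp add: abs_less_iff)
    have e2: "\<delta> * (2 * \<epsilon> / 3) = 2 * \<eta>" by (simp add: \<eta>_def)
    have "\<delta> * (grad \<phi> u \<bullet> e) < \<delta> * cc + 2 * \<eta>" using a1 b1' b3' phPp by linarith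
    then have up: "\<delta> * (grad \<phi> u \<bullet> e - cc) < \<delta> * (2 * \<epsilon> / 3)" unfolding e2 by (simp add: right_diff_distrib)
    have "- \<delta> * (grad \<phi> u \<bullet> e) < - \<delta> * cc + 2 * \<eta>" using a2 b2' b3' phPm by linarith
    then have lo: "\<delta> * (cc - grad \<phi> u \<bullet> e) < \<delta> * (2 * \<epsilon> / 3)" unfolding e2 by (simp add: right_diff_distrib)
    have "grad \<phi> u \<bullet> e - cc < 2 * \<epsilon> / 3" using up dp by simp
    moreover have "cc - grad \<phi> u \<bullet> e < 2 * \<epsilon> / 3" using lo dp by simp
    ultimately show "\<bar>grad \<phi> u \<bullet> e - cc\<bar> < \<epsilon>" using ep by linarith
  qed
qed

end

theorem mainTheorem5:
  fixes n :: nat and p :: "nat \<Rightarrow> real^2" and b :: "nat \<Rightarrow> real" and A :: real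
    and U :: "(real^2) set" and \<phi> :: "real^2 \<Rightarrow> real" and i :: nat and ustar :: "real^2"
  assumes poly: "ccw_convex_polygon n p"
    and U_def: "U = interior (convex hull (p ` {1..n}))"
    and A: "A \<ge> 0"
    and cont: "continuous_on (closure U) \<phi>"
    and conv: "convex_on (closure U) \<phi>"
    and smooth: "smooth_on U \<phi>"
    and MA: "\<forall>u\<in>U. det (hessian \<phi> u) = Vpot A n p u"
    and vert: "\<forall>k\<in>{1..n}. \<phi> (p k) = b k"
    and edge: "\<forall>k\<in>{1..n}. \<exists>a c. \<forall>x\<in>closed_segment (p k) (p (cyc_succ n k)). \<phi> x = a \<bullet> x + c"
    and i: "i \<in> {1..n}"
    and ustar: "ustar \<in> open_segment (p i) (p (cyc_succ n i))"
  shows "filterlim (\<lambda>u. grad \<phi> u \<bullet> outward_normal (p i) (p (cyc_succ n i))) at_top (at ustar within U)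
    \<and> ((\<lambda>u. grad \<phi> u \<bullet> (p (cyc_succ n i) - p i)) \<longlongrightarrow> b (cyc_succ n i) - b i) (at ustar within U)"
proof -
  interpret S: setting n p b A U \<phi> i ustar
    by (unfold_locales) (fact poly U_def A cont conv smooth MA vert edge i ustar)+
  have ne: "norm S.e > 0" using S.e_ne by simp
  have nu: "grad \<phi> u \<bullet> outward_normal (p i) (p (cyc_succ n i)) = - (grad \<phi> u \<bullet> S.w) / norm S.e" for u
  proof -
    have pe: "p (cyc_succ n i) - p i = S.e" by (simp add: S.e_def S.si_def)
    have "outward_normal (p i) (p (cyc_succ n i)) = (1 / norm S.e) *\<^sub>R vector [S.e$2, -(S.e$1)]"
      unfolding outward_normal_def Let_def pe by simp
    then have "grad \<phi> u \<bullet> outward_normal (p i) (p (cyc_succ n i)) = (grad \<phi> u \<bullet> vector [S.e$2, -(S.e$1)]) / norm S.e"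
      by simp
    moreover have "grad \<phi> u \<bullet> vector [S.e$2, -(S.e$1)] = - (grad \<phi> u \<bullet> S.w)"
      by (simp add: inner2 S.w_def)
    ultimately show ?thesis by simp
  qed
  have part1: "filterlim (\<lambda>u. grad \<phi> u \<bullet> outward_normal (p i) (p (cyc_succ n i))) at_top (at ustar within U)"
    unfolding filterlim_at_top
  proof
    fix Z :: real
    obtain d where d: "d > 0" "\<forall>u\<in>U. dist u ustar < d \<longrightarrow> grad \<phi> u \<bullet> S.w \<le> - (Z * norm S.e)"
      using S.normal_part by blast
    show "\<forall>\<^sub>F u in at ustar within U. Z \<le> grad \<phi> u \<bullet> outward_normal (p i) (p (cyc_succ n i))"
      unfolding eventually_at
    proof (intro exI[of _ d] conjI ballI impI d(1))
      fix u assume "u \<in> U" "u \<noteq> ustar \<and> dist u ustar < d"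
      then have "grad \<phi> u \<bullet> S.w \<le> - (Z * norm S.e)" using d by blast
      then have "Z * norm S.e \<le> - (grad \<phi> u \<bullet> S.w)" by linarith
      then have "Z \<le> (- (grad \<phi> u \<bullet> S.w)) / norm S.e" using ne by (subst pos_le_divide_eq) auto
      then show "Z \<le> grad \<phi> u \<bullet> outward_normal (p i) (p (cyc_succ n i))" by (simp add: nu)
    qed
  qed
  have part2: "((\<lambda>u. grad \<phi> u \<bullet> (p (cyc_succ n i) - p i)) \<longlongrightarrow> b (cyc_succ n i) - b i) (at ustar within U)"
    unfolding tendsto_iff
  proof (intro allI impI)
    fix \<epsilon> :: real assume ep: "\<epsilon> > 0"
    obtain d where d: "d > 0" "\<forall>u\<in>U. dist u ustar < d \<longrightarrow> \<bar>grad \<phi> u \<bullet> S.e - S.cc\<bar> < \<epsilon>"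
      using S.tangential_part ep by blast
    show "\<forall>\<^sub>F u in at ustar within U. dist (grad \<phi> u \<bullet> (p (cyc_succ n i) - p i)) (b (cyc_succ n i) - b i) < \<epsilon>"
      unfolding eventually_at
      using d by (intro exI[of _ d]) (auto simp: dist_real_def S.e_def S.cc_def S.si_def)
  qed
  show ?thesis using part1 part2 by blast
qed

end
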